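(* Let $1\le k<n$. Let $G$ be a simple graph on $n$ vertices (identified with its $n\times n$ binary adjacency matrix, with graph state $|G\rangle$ on $n$ qubits), and let $\Gamma$ be a $k\times n$ binary matrix. Define the linear map $\mathcal{E}_{G,\Gamma}:(\mathbb{C}^2)^{\otimes k}\to(\mathbb{C}^2)^{\otimes n}$ by $\mathcal{E}_{G,\Gamma}|x\rangle = Z^{x\Gamma}|G\rangle$ for $x\in\mathbb{F}_2^k$ (row vector, $x\Gamma\in\mathbb{F}_2^n$ computed mod 2, $Z^{c}=\bigotimes_j Z^{c_j}$); this is the linear map of the graph-like ZX-diagram with $k$ input Z-spiders, $n$ output Z-spiders, Hadamard edges between inputs and outputs given by the bi-adjacency matrix $\Gamma$ and Hadamard edges among outputs given by $G$. Let $C$ be any $k$-qubit Clifford unitary and $L_c$ any tensor product of $n$ single-qubit Clifford unitaries, and set $\mathcal{E}=L_c\,\mathcal{E}_{G,\Gamma}\,C$. Then $\mathcal{E}$ is a valid stabilizer encoder (i.e., up to a nonzero scalar it is an isometry, mapping distinct input basis states to distinct orthonormal encoded states, whose image is the $2^k$-dimensional codespace of an $[[n,k]]$ stabilizer code) if and only if $\Gamma$ has rank $k$ over $\mathbb{F}_2$.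
   Context: The graph state is $|G\rangle=\prod_{(u,v)\in E(G)}\mathrm{CZ}_{u,v}|+\rangle^{\otimes n}$. An $[[n,k]]$ stabilizer code's codespace is the common $+1$ eigenspace of an abelian subgroup of the $n$-qubit Pauli group not containing $-I$, generated by $n-k$ independent elements. The Clifford group is the normalizer of the Pauli group in the unitary group. *)

theory Defs
  imports "Jordan_Normal_Form.Schur_Decomposition" "Jordan_Normal_Form.DL_Rank" "HOL-Library.Z2"
begin

text \<open>Basis index i < 2^m corresponds to the bit string whose
j-th entry (qubit j, for j < m) is bit j of i.\<close>

definition qbit :: "nat \<Rightarrow> nat \<Rightarrow> nat" where
  "qbit i j = (if odd (i div 2 ^ j) then 1 else 0)"

definition tensor_ops :: "nat \<Rightarrow> (nat \<Rightarrow> complex mat) \<Rightarrow> complex mat" where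
  "tensor_ops m U = mat (2 ^ m) (2 ^ m) (\<lambda>(i, i'). \<Prod>j<m. U j $$ (qbit i j, qbit i' j))"

definition pauli_X :: "complex mat" where
  "pauli_X = mat_of_rows_list 2 [[0, 1], [1, 0]]"

definition pauli_Z :: "complex mat" where
  "pauli_Z = mat_of_rows_list 2 [[1, 0], [0, -1]]"

definition pauli_group :: "nat \<Rightarrow> complex mat set" where
  "pauli_group m = {(\<i> ^ c) \<cdot>\<^sub>m tensor_ops m (\<lambda>j. pauli_X ^\<^sub>m a j * pauli_Z ^\<^sub>m b j)
                    | c a b. True}"

definition unitary_mat :: "nat \<Rightarrow> complex mat \<Rightarrow> bool" where
  "unitary_mat d U \<longleftrightarrow> U \<in> carrier_mat d d \<and> mat_adjoint U * U = 1\<^sub>m d"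

definition clifford :: "nat \<Rightarrow> complex mat \<Rightarrow> bool" where
  "clifford m U \<longleftrightarrow> unitary_mat (2 ^ m) U \<and>
     (\<lambda>P. U * P * mat_adjoint U) ` pauli_group m = pauli_group m"

inductive_set gen_group :: "nat \<Rightarrow> complex mat set \<Rightarrow> complex mat set"
  for m :: nat and S :: "complex mat set" where
  gen_one: "1\<^sub>m (2 ^ m) \<in> gen_group m S"
| gen_mult: "g \<in> S \<Longrightarrow> h \<in> gen_group m S \<Longrightarrow> g * h \<in> gen_group m S"

definition stabilizer_group :: "nat \<Rightarrow> nat \<Rightarrow> complex mat set \<Rightarrow> bool" where
  "stabilizer_group m k S \<longleftrightarrow>
     (\<exists>gs. length gs = m - k \<and> set gs \<subseteq> pauli_group m \<and> S = gen_group m (set gs) \<and>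
          (\<forall>i < length gs. gs ! i \<notin> gen_group m (set gs - {gs ! i}))) \<and>
     (\<forall>g\<in>S. \<forall>h\<in>S. g * h = h * g) \<and>
     - 1\<^sub>m (2 ^ m) \<notin> S"

definition codespace :: "nat \<Rightarrow> complex mat set \<Rightarrow> complex vec set" where
  "codespace m S = {v \<in> carrier_vec (2 ^ m). \<forall>s\<in>S. s *\<^sub>v v = v}"

definition stabilizer_encoder :: "nat \<Rightarrow> nat \<Rightarrow> complex mat \<Rightarrow> bool" where
  "stabilizer_encoder n k E \<longleftrightarrow> E \<in> carrier_mat (2 ^ n) (2 ^ k) \<and>
     (\<exists>c. c \<noteq> 0 \<and> mat_adjoint E * E = c \<cdot>\<^sub>m 1\<^sub>m (2 ^ k)) \<and>
     (\<exists>S. stabilizer_group n k S \<and>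
          {E *\<^sub>v v | v. v \<in> carrier_vec (2 ^ k)} = codespace n S)"

definition simple_graph_adj :: "nat \<Rightarrow> bit mat \<Rightarrow> bool" where
  "simple_graph_adj n G \<longleftrightarrow> G \<in> carrier_mat n n \<and> transpose_mat G = G \<and> (\<forall>i<n. G $$ (i, i) = 0)"

definition graph_edges :: "nat \<Rightarrow> bit mat \<Rightarrow> (nat \<times> nat) set" where
  "graph_edges n G = {(u, v). u < v \<and> v < n \<and> G $$ (u, v) = 1}"

definition cz_gate :: "nat \<Rightarrow> nat \<Rightarrow> nat \<Rightarrow> complex mat" where
  "cz_gate m u v = mat (2 ^ m) (2 ^ m)
     (\<lambda>(i, i'). if i = i' then (if qbit i u = 1 \<and> qbit i v = 1 then -1 else 1) else 0)"

definition plus_state :: "nat \<Rightarrow> complex vec" where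
  "plus_state m = vec (2 ^ m) (\<lambda>i. 1 / complex_of_real (sqrt (2 ^ m)))"

definition graph_state :: "nat \<Rightarrow> bit mat \<Rightarrow> complex vec" where
  "graph_state n G = foldr (\<lambda>(u, v) s. cz_gate n u v *\<^sub>v s)
      [(u, v). u \<leftarrow> [0..<n], v \<leftarrow> [0..<n], (u, v) \<in> graph_edges n G] (plus_state n)"

definition bits_vec :: "nat \<Rightarrow> nat \<Rightarrow> bit vec" where
  "bits_vec k i = vec k (\<lambda>r. of_nat (qbit i r))"

definition Z_pow :: "nat \<Rightarrow> bit vec \<Rightarrow> complex mat" where
  "Z_pow n c = tensor_ops n (\<lambda>j. if c $ j = 1 then pauli_Z else 1\<^sub>m 2)"

definition graph_encoder :: "nat \<Rightarrow> nat \<Rightarrow> bit mat \<Rightarrow> bit mat \<Rightarrow> complex mat" where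
  "graph_encoder n k G \<Gamma> = mat_of_cols (2 ^ n)
     (map (\<lambda>i. Z_pow n (transpose_mat \<Gamma> *\<^sub>v bits_vec k i) *\<^sub>v graph_state n G) [0..<2 ^ k])"

end

theory Submission
  imports Defs
begin

lemma qbit_cases: "qbit i j = 0 \<or> qbit i j = 1"
  by (simp add: qbit_def)

lemma qbit_less2[simp]: "qbit i j < 2"
  by (simp add: qbit_def)

lemma qbit_0: "qbit i 0 = i mod 2"
  by (simp add: qbit_def odd_iff_mod_2_eq_one)

lemma qbit_Suc: "qbit i (Suc j) = qbit (i div 2) j"
  by (simp add: qbit_def div_mult2_eq)

lemma qbit_small: "i < 2 \<Longrightarrow> qbit i 0 = i"
  by (cases "i = 0") (auto simp: qbit_def)

lemma qbit_zero[simp]: "qbit 0 j = 0"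
  by (simp add: qbit_def)

lemma bits_inj:
  assumes "i < 2 ^ n" "i' < 2 ^ n" "\<forall>j<n. qbit i j = qbit i' j"
  shows "i = i'"
  using assms
proof (induction n arbitrary: i i')
  case 0 then show ?case by simp
next
  case (Suc n)
  have "i mod 2 = i' mod 2" using Suc.prems(3)[rule_format, of 0] by (simp add: qbit_0)
  moreover have "i div 2 = i' div 2"
    apply (rule Suc.IH)
    using Suc.prems by (auto simp: qbit_Suc[symmetric] less_mult_imp_div_less)
  ultimately show ?case by (metis div_mult_mod_eq)
qed

lemma sum_split2: "(\<Sum>i<2 * m. g i) = (\<Sum>q<m. g (2 * q) + g (2 * q + 1))"
  for g :: "nat \<Rightarrow> 'a::comm_monoid_add"
  by (induction m) (auto simp: ac_simps)

lemma sum_prod_bits: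
  fixes f :: "nat \<Rightarrow> nat \<Rightarrow> 'a::comm_semiring_1"
  shows "(\<Sum>i<2 ^ n. \<Prod>j<n. f j (qbit i j)) = (\<Prod>j<n. f j 0 + f j 1)"
proof (induction n arbitrary: f)
  case 0 then show ?case by simp
next
  case (Suc n)
  have split: "(\<Prod>j<Suc n. f j (qbit i j)) = f 0 (i mod 2) * (\<Prod>j<n. f (Suc j) (qbit (i div 2) j))" for i
    unfolding prod.lessThan_Suc_shift by (simp add: qbit_0 qbit_Suc)
  have "(\<Sum>i<2 ^ Suc n. \<Prod>j<Suc n. f j (qbit i j))
      = (\<Sum>q<2^n. f 0 0 * (\<Prod>j<n. f (Suc j) (qbit q j)) + f 0 1 * (\<Prod>j<n. f (Suc j) (qbit q j)))"
    unfolding split power_Suc sum_split2 by simp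
  also have "\<dots> = (f 0 0 + f 0 1) * (\<Sum>q<2^n. (\<Prod>j<n. f (Suc j) (qbit q j)))"
    by (simp add: sum_distrib_left distrib_right sum.distrib)
  also have "\<dots> = (f 0 0 + f 0 1) * (\<Prod>j<n. f (Suc j) 0 + f (Suc j) 1)"
    using Suc.IH[of "\<lambda>j. f (Suc j)"] by simp
  also have "\<dots> = (\<Prod>j<Suc n. f j 0 + f j 1)"
    unfolding prod.lessThan_Suc_shift by simp
  finally show ?case .
qed

definition idxf :: "nat \<Rightarrow> (nat \<Rightarrow> bool) \<Rightarrow> nat" where
  "idxf n f = (\<Sum>j<n. if f j then 2 ^ j else 0)"

lemma idxf_less: "idxf n f < 2 ^ n"
proof (induction n)
  case 0 then show ?case by (simp add: idxf_def)
next
  case (Suc n)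
  then show ?case by (auto simp: idxf_def)
qed

lemma idxf_bit: "j < n \<Longrightarrow> qbit (idxf n f) j = (if f j then 1 else 0)"
proof (induction n)
  case 0 then show ?case by simp
next
  case (Suc n)
  have eq: "idxf (Suc n) f = idxf n f + (if f n then 2 ^ n else 0)"
    by (simp add: idxf_def)
  have lt: "idxf n f < 2 ^ n" by (rule idxf_less)
  show ?case
  proof (cases "j < n")
    case True
    have "(idxf n f + 2 ^ n) div 2 ^ j = idxf n f div 2 ^ j + 2 ^ (n - j)"
    proof -
      have "(2::nat) ^ n = 2 ^ j * 2 ^ (n - j)" using True by (simp flip: power_add)
      then show ?thesis by (simp add: div_add_self2)
    qed
    moreover have "even ((2::nat) ^ (n - j))" using True by simp
    ultimately have "qbit (idxf n f + 2 ^ n) j = qbit (idxf n f) j"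
      by (simp add: qbit_def)
    then show ?thesis using Suc True eq by auto
  next
    case False
    then have j: "j = n" using Suc by simp
    have "idxf n f div 2 ^ n = 0" using lt by simp
    moreover have "(idxf n f + 2 ^ n) div 2 ^ n = 1" using lt
      by (simp add: div_add_self2)
    ultimately show ?thesis using eq j by (auto simp: qbit_def)
  qed
qed

declare add_bit_eq_xor[simp del] mult_bit_eq_and[simp del]

definition chi :: "bit \<Rightarrow> complex" where
  "chi b = (if b = 1 then -1 else 1)"

lemma chi_0[simp]: "chi 0 = 1" and chi_1[simp]: "chi 1 = -1"
  by (auto simp: chi_def)

lemma bit_add_self[simp]: "(a::bit) + a = 0"
  by (cases a) auto

lemma bit_uminus[simp]: "- (a::bit) = a"
  by (cases a) auto

lemma bit_minus[simp]: "(a::bit) - b = a + b"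
  by (cases a; cases b) auto

lemma chi_add: "chi (a + b) = chi a * chi b"
  by (cases a; cases b) (auto simp: chi_def)

lemma chi_sq[simp]: "chi a * chi a = 1"
  by (cases a) (auto simp: chi_def)

lemma chi_cnj[simp]: "cnj (chi a) = chi a"
  by (cases a) (auto simp: chi_def)

lemma chi_nonzero[simp]: "chi a \<noteq> 0"
  by (cases a) (auto simp: chi_def)

lemma chi_sum: "chi (\<Sum>j\<in>A. f j) = (\<Prod>j\<in>A. chi (f j))"
proof (induction A rule: infinite_finite_induct)
  case (insert x F) then show ?case by (simp add: chi_add)
qed auto

lemma chi_eq_iff: "chi a = chi b \<longleftrightarrow> a = b"
  by (cases a; cases b) (auto simp: chi_def)

lemma of_nat_qbit: "(of_nat (qbit i j) :: bit) = (if qbit i j = 1 then 1 else 0)"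
  using qbit_cases[of i j] by auto

lemma bits_vec_carrier[simp]: "bits_vec n i \<in> carrier_vec n"
  by (simp add: bits_vec_def)

lemma dim_bits_vec[simp]: "dim_vec (bits_vec n i) = n"
  by (simp add: bits_vec_def)

lemma bits_vec_index[simp]: "j < n \<Longrightarrow> bits_vec n i $ j = of_nat (qbit i j)"
  by (simp add: bits_vec_def)

lemma bits_vec_0: "bits_vec n 0 = 0\<^sub>v n"
  by (auto simp: bits_vec_def)

lemma bits_vec_inj:
  assumes "i < 2 ^ n" "i' < 2 ^ n" "bits_vec n i = bits_vec n i'"
  shows "i = i'"
proof (rule bits_inj[OF assms(1,2)], intro allI impI)
  fix j assume j: "j < n"
  have "bits_vec n i $ j = bits_vec n i' $ j" using assms(3) by simp
  then have "(of_nat (qbit i j) :: bit) = of_nat (qbit i' j)" using j by simp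
  then show "qbit i j = qbit i' j"
    using qbit_cases[of i j] qbit_cases[of i' j] by (auto simp: of_nat_qbit)
qed

definition vidx :: "bit vec \<Rightarrow> nat" where
  "vidx y = idxf (dim_vec y) (\<lambda>j. y $ j = 1)"

lemma vidx_less: "y \<in> carrier_vec n \<Longrightarrow> vidx y < 2 ^ n"
  by (auto simp: vidx_def idxf_less)

lemma bits_vec_vidx: "y \<in> carrier_vec n \<Longrightarrow> bits_vec n (vidx y) = y"
  by (rule eq_vecI) (auto simp: vidx_def idxf_bit)

lemma bits_vec_eq_iff:
  assumes "i < 2 ^ n" "y \<in> carrier_vec n"
  shows "bits_vec n i = y \<longleftrightarrow> i = vidx y"
  using assms bits_vec_inj[OF assms(1) vidx_less[OF assms(2)]] bits_vec_vidx[OF assms(2)] by auto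

lemma sum_delta_bits:
  assumes "y \<in> carrier_vec n"
  shows "(\<Sum>i<2 ^ n. if bits_vec n i = y then F i else 0) = F (vidx y)"
proof -
  have "(\<Sum>i<2 ^ n. if bits_vec n i = y then F i else 0) = (\<Sum>i<2 ^ n. if i = vidx y then F i else 0)"
    by (rule sum.cong) (auto simp: bits_vec_eq_iff[OF _ assms])
  also have "\<dots> = F (vidx y)" using vidx_less[OF assms] by (simp add: sum.delta)
  finally show ?thesis .
qed

lemma vec_bit_swap:
  assumes "a \<in> carrier_vec n" "b \<in> carrier_vec n" "s \<in> carrier_vec n"
  shows "(a = b + s) \<longleftrightarrow> (b = a + (s :: bit vec))"
proof
  assume "a = b + s" then show "b = a + s" using assms
    by (intro eq_vecI) (auto simp: add.assoc)
next
  assume "b = a + s" then show "a = b + s" using assms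
    by (intro eq_vecI) (auto simp: add.assoc)
qed

lemma scalar_bits: "d \<in> carrier_vec n \<Longrightarrow>
   d \<bullet> bits_vec n i = (\<Sum>j<n. d $ j * of_nat (qbit i j))"
  by (simp add: scalar_prod_def atLeast0LessThan)

lemma char_sum:
  assumes d: "d \<in> carrier_vec n"
  shows "(\<Sum>i<2 ^ n. chi (d \<bullet> bits_vec n i)) = (if d = 0\<^sub>v n then 2 ^ n else 0)"
proof -
  have "(\<Sum>i<2 ^ n. chi (d \<bullet> bits_vec n i)) = (\<Sum>i<2 ^ n. \<Prod>j<n. chi (d $ j * of_nat (qbit i j)))"
    by (simp add: scalar_bits[OF d] chi_sum)
  also have "\<dots> = (\<Prod>j<n. chi (d $ j * of_nat 0) + chi (d $ j * of_nat 1))"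
    by (rule sum_prod_bits[where f = "\<lambda>j q. chi (d $ j * of_nat q)"])
  also have "\<dots> = (\<Prod>j<n. if d $ j = 1 then 0 else 2)"
    by (rule prod.cong) (auto simp: chi_def)
  also have "\<dots> = (if d = 0\<^sub>v n then 2 ^ n else 0)"
  proof (cases "d = 0\<^sub>v n")
    case True then show ?thesis by simp
  next
    case False
    then obtain j where "j < n" "d $ j \<noteq> 0" using d by (metis carrier_vecD eq_vecI index_zero_vec)
    then show ?thesis using False by (auto intro!: prod_zero bexI[of _ j])
  qed
  finally show ?thesis .
qed

lemma char_sum':
  assumes d: "d \<in> carrier_vec n"
  shows "(\<Sum>i<2 ^ n. chi (bits_vec n i \<bullet> d)) = (if d = 0\<^sub>v n then 2 ^ n else 0)"
  using char_sum[OF d] comm_scalar_prod[OF d bits_vec_carrier] by simp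

lemma bit_vec_add_eq_0_iff:
  assumes "c \<in> carrier_vec n" "d \<in> carrier_vec n"
  shows "(c + d = 0\<^sub>v n) \<longleftrightarrow> c = (d :: bit vec)"
proof
  assume h: "c + d = 0\<^sub>v n"
  show "c = d"
  proof (rule eq_vecI)
    fix i assume i: "i < dim_vec d"
    have "(c + d) $ i = 0" using h i assms by simp
    then have "c $ i + d $ i = 0" using i assms by simp
    then show "c $ i = d $ i" by (cases "c $ i"; cases "d $ i") auto
  qed (use assms in auto)
next
  assume "c = d" then show "c + d = 0\<^sub>v n" using assms by (intro eq_vecI) auto
qed

lemma (in vec_space) rank_struct:
  assumes A: "A \<in> carrier_mat n nc"
  obtains sl where "distinct sl" "set sl \<subseteq> set (cols A)" "length sl = rank A"
    "\<And>v. v \<in> carrier_vec (rank A) \<Longrightarrow> mat_of_cols n sl *\<^sub>v v = 0\<^sub>v n \<Longrightarrow> v = 0\<^sub>v (rank A)"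
    "\<And>m. m < nc \<Longrightarrow> \<exists>w \<in> carrier_vec (rank A). col A m = mat_of_cols n sl *\<^sub>v w"
proof -
  obtain S where max: "maximal S (\<lambda>T. T \<subseteq> set (cols A) \<and> lin_indpt T)"
    using maximal_exists[of "(\<lambda>T. T \<subseteq> set (cols A) \<and> lin_indpt T)" "card (set (cols A))" "{}"]
    by (meson List.finite_set card_mono empty_iff empty_subsetI finite_lin_indpt2 rev_finite_subset)
  have rk: "rank A = card S" using rank_card_indpt[OF A max] .
  have SA: "S \<subseteq> set (cols A)" and li: "lin_indpt S" using max unfolding maximal_def by auto
  have Sc: "S \<subseteq> carrier_vec n" using SA A cols_dim by blast
  have finS: "finite S" using SA finite_subset by blast
  obtain sl where sl: "distinct sl" "set sl = S" using finite_distinct_list[OF finS] by blast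
  have len: "length sl = rank A" using rk sl distinct_card by fastforce
  define B where "B = mat_of_cols n sl"
  have Bc: "B \<in> carrier_mat n (rank A)" unfolding B_def using len mat_of_cols_carrier[of n sl] by simp
  have colsB: "cols B = sl" unfolding B_def using sl Sc by (simp add: cols_mat_of_cols)
  have indep: "v = 0\<^sub>v (rank A)" if v: "v \<in> carrier_vec (rank A)" "B *\<^sub>v v = 0\<^sub>v n" for v
  proof (rule ccontr)
    assume "v \<noteq> 0\<^sub>v (rank A)"
    then have "lin_dep (set (cols B))" using lin_depI[OF Bc v(1) _ v(2)] colsB sl by auto
    then show False using li colsB sl by simp
  qed
  have span: "\<exists>w \<in> carrier_vec (rank A). col A m = B *\<^sub>v w" if m: "m < nc" for m
  proof -
    let ?c = "col A m"
    have cA: "?c \<in> set (cols A)" using m A by (simp add: cols_def)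
    have cc: "?c \<in> carrier_vec n" using A by (simp add: carrier_vecI)
    have inspan: "?c \<in> span S"
    proof (cases "?c \<in> S")
      case True then show ?thesis using in_own_span[OF Sc] by blast
    next
      case False
      have "\<not> lin_indpt (S \<union> {?c})"
      proof
        assume "lin_indpt (S \<union> {?c})"
        then have "S \<union> {?c} = S" using max cA SA unfolding maximal_def by blast
        then show False using False by blast
      qed
      then show ?thesis using lin_dep_iff_in_span[OF Sc li cc False] by simp
    qed
    obtain a where a: "lincomb a S = ?c" using finite_in_span[OF finS Sc inspan] by auto
    have "B *\<^sub>v vec (rank A) (\<lambda>i. a (col B i)) = lincomb a (set (cols B))"
      using mat_mult_eq_lincomb[OF Bc] colsB sl by simp
    then show ?thesis using a colsB sl by (intro bexI[of _ "vec (rank A) (\<lambda>i. a (col B i))"]) auto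
  qed
  show ?thesis
    using that[OF sl(1) _ len] sl SA indep span unfolding B_def by blast
qed

lemma wide_kernel:
  fixes A :: "'a :: field mat"
  assumes A: "A \<in> carrier_mat m p" and mp: "m < p"
  shows "\<exists>v \<in> carrier_vec p. v \<noteq> 0\<^sub>v p \<and> A *\<^sub>v v = 0\<^sub>v m"
proof -
  define A' where "A' = mat\<^sub>r p p (\<lambda>i. if i = p - 1 then 0\<^sub>v p else (if i < m then row A i else 0\<^sub>v p))"
  have "det A' = 0" unfolding A'_def
    by (rule det_row_0) (use mp A in auto)
  moreover have A'c: "A' \<in> carrier_mat p p" unfolding A'_def by simp
  ultimately obtain v where v: "v \<in> carrier_vec p" "v \<noteq> 0\<^sub>v p" "A' *\<^sub>v v = 0\<^sub>v p"
    using det_0_iff_vec_prod_zero_field by blast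
  have "A *\<^sub>v v = 0\<^sub>v m"
  proof (rule eq_vecI)
    fix i assume i: "i < dim_vec (0\<^sub>v m)"
    then have im: "i < m" by simp
    have "(A' *\<^sub>v v) $ i = 0" using v(3) im mp by simp
    moreover have "(A' *\<^sub>v v) $ i = row A i \<bullet> v" using im mp unfolding A'_def
      by (subst index_mult_mat_vec) (auto simp: row_mat_of_row_fun A)
    ultimately show "(A *\<^sub>v v) $ i = 0\<^sub>v m $ i" using im A by simp
  qed (use A in simp)
  then show ?thesis using v by blast
qed

lemma gamma_rank_aux:
  fixes \<Gamma> :: "'a :: field mat"
  assumes \<Gamma>: "\<Gamma> \<in> carrier_mat k n"
  shows "(vec_space.rank k \<Gamma> = k \<longrightarrow> (\<exists>j Binv. (\<forall>a<k. j a < n) \<and> inj_on j {..<k} \<and> Binv \<in> carrier_mat k k \<and>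
            Binv * mat k k (\<lambda>(r,a). \<Gamma> $$ (r, j a)) = 1\<^sub>m k \<and> mat k k (\<lambda>(r,a). \<Gamma> $$ (r, j a)) * Binv = 1\<^sub>m k))
     \<and> (vec_space.rank k \<Gamma> \<noteq> k \<longrightarrow> (\<exists>x \<in> carrier_vec k. x \<noteq> 0\<^sub>v k \<and> transpose_mat \<Gamma> *\<^sub>v x = 0\<^sub>v n))"
proof -
  interpret vs: vec_space "TYPE('a)" k .
  obtain sl where sl: "distinct sl" "set sl \<subseteq> set (cols \<Gamma>)" "length sl = vs.rank \<Gamma>"
    and indep: "\<And>v. v \<in> carrier_vec (vs.rank \<Gamma>) \<Longrightarrow> mat_of_cols k sl *\<^sub>v v = 0\<^sub>v k \<Longrightarrow> v = 0\<^sub>v (vs.rank \<Gamma>)"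
    and span: "\<And>m. m < n \<Longrightarrow> \<exists>w \<in> carrier_vec (vs.rank \<Gamma>). col \<Gamma> m = mat_of_cols k sl *\<^sub>v w"
    using vs.rank_struct[OF \<Gamma>] by blast
  define r where "r = vs.rank \<Gamma>"
  define B where "B = mat_of_cols k sl"
  have Bc: "B \<in> carrier_mat k r" unfolding B_def r_def using sl(3) mat_of_cols_carrier[of k sl] by simp
  have rle: "r \<le> k"
  proof (rule ccontr)
    assume "\<not> r \<le> k"
    then obtain v where "v \<in> carrier_vec r" "v \<noteq> 0\<^sub>v r" "B *\<^sub>v v = 0\<^sub>v k"
      using wide_kernel[OF Bc] by auto
    then show False using indep unfolding B_def r_def by auto
  qed
  have part2: "\<exists>x \<in> carrier_vec k. x \<noteq> 0\<^sub>v k \<and> transpose_mat \<Gamma> *\<^sub>v x = 0\<^sub>v n" if rk: "r \<noteq> k"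
  proof -
    have BTc: "transpose_mat B \<in> carrier_mat r k" using Bc by simp
    obtain x where x: "x \<in> carrier_vec k" "x \<noteq> 0\<^sub>v k" "transpose_mat B *\<^sub>v x = 0\<^sub>v r"
      using wide_kernel[OF BTc] rk rle by auto
    have "transpose_mat \<Gamma> *\<^sub>v x = 0\<^sub>v n"
    proof (rule eq_vecI)
      fix m assume "m < dim_vec (0\<^sub>v n)"
      then have m: "m < n" by simp
      obtain w where w: "w \<in> carrier_vec r" "col \<Gamma> m = B *\<^sub>v w" using span[OF m] unfolding B_def r_def by auto
      have "(transpose_mat \<Gamma> *\<^sub>v x) $ m = col \<Gamma> m \<bullet> x" using m \<Gamma> by simp
      also have "\<dots> = x \<bullet> (B *\<^sub>v w)" using w Bc x by (simp add: comm_scalar_prod[of _ k])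
      also have "\<dots> = (transpose_mat B *\<^sub>v x) \<bullet> w"
        using transpose_vec_mult_scalar[OF Bc w(1) x(1)] by simp
      also have "\<dots> = 0" using x(3) w(1) by simp
      finally show "(transpose_mat \<Gamma> *\<^sub>v x) $ m = 0\<^sub>v n $ m" using m by simp
    qed (use \<Gamma> in simp)
    then show ?thesis using x by blast
  qed
  have part1: "\<exists>j Binv. (\<forall>a<k. j a < n) \<and> inj_on j {..<k} \<and> Binv \<in> carrier_mat k k \<and>
            Binv * mat k k (\<lambda>(r,a). \<Gamma> $$ (r, j a)) = 1\<^sub>m k \<and> mat k k (\<lambda>(r,a). \<Gamma> $$ (r, j a)) * Binv = 1\<^sub>m k"
    if rk: "r = k"
  proof -
    have "\<forall>a. a < k \<longrightarrow> (\<exists>m. m < n \<and> sl ! a = col \<Gamma> m)"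
    proof (intro allI impI)
      fix a assume "a < k"
      then have "sl ! a \<in> set (cols \<Gamma>)" using sl rk unfolding r_def by auto
      then show "\<exists>m. m < n \<and> sl ! a = col \<Gamma> m" using \<Gamma> by (auto simp: in_set_conv_nth)
    qed
    then obtain j where j: "\<And>a. a < k \<Longrightarrow> j a < n \<and> sl ! a = col \<Gamma> (j a)" by metis
    have jinj: "inj_on j {..<k}"
    proof (rule inj_onI)
      fix a b assume "a \<in> {..<k}" "b \<in> {..<k}" "j a = j b"
      then have "sl ! a = sl ! b" "a < length sl" "b < length sl" using j sl rk unfolding r_def by auto
      then show "a = b" using sl(1) nth_eq_iff_index_eq by blast
    qed
    have Beq: "B = mat k k (\<lambda>(r,a). \<Gamma> $$ (r, j a))"
    proof (rule eq_matI)
      fix i a assume "i < dim_row (mat k k (\<lambda>(r,a). \<Gamma> $$ (r, j a)))" "a < dim_col (mat k k (\<lambda>(r,a). \<Gamma> $$ (r, j a)))"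
      then have i: "i < k" and a: "a < k" by auto
      have "B $$ (i, a) = sl ! a $ i" unfolding B_def using i a sl rk r_def by (simp add: mat_of_cols_index)
      also have "\<dots> = \<Gamma> $$ (i, j a)" using j[OF a] i \<Gamma> by simp
      finally show "B $$ (i, a) = mat k k (\<lambda>(r,a). \<Gamma> $$ (r, j a)) $$ (i, a)" using i a by simp
    qed (use Bc rk in auto)
    have Bk: "B \<in> carrier_mat k k" using Bc rk by simp
    have "det B \<noteq> 0"
    proof
      assume "det B = 0"
      then obtain v where "v \<in> carrier_vec k" "v \<noteq> 0\<^sub>v k" "B *\<^sub>v v = 0\<^sub>v k"
        using det_0_iff_vec_prod_zero_field[OF Bk] by auto
      then show False using indep rk unfolding B_def r_def by auto
    qed
    from det_non_zero_imp_unit[OF Bk this, of "()"]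
    obtain Binv where "Binv \<in> carrier_mat k k" "Binv * B = 1\<^sub>m k" "B * Binv = 1\<^sub>m k"
      unfolding Units_def ring_mat_def by auto
    then show ?thesis using j jinj Beq by blast
  qed
  show ?thesis using part1 part2 unfolding r_def by blast
qed

lemma gamma_rank_inj:
  fixes \<Gamma> :: "'a :: field mat"
  assumes \<Gamma>: "\<Gamma> \<in> carrier_mat k n"
  shows "vec_space.rank k \<Gamma> = k \<longleftrightarrow> (\<forall>x \<in> carrier_vec k. transpose_mat \<Gamma> *\<^sub>v x = 0\<^sub>v n \<longrightarrow> x = 0\<^sub>v k)"
proof
  assume rk: "vec_space.rank k \<Gamma> = k"
  then obtain j Binv where j: "\<forall>a<k. j a < n" and Bi: "Binv \<in> carrier_mat k k"
    and BB: "mat k k (\<lambda>(r,a). \<Gamma> $$ (r, j a)) * Binv = 1\<^sub>m k"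
    using gamma_rank_aux[OF \<Gamma>] by blast
  define B where "B = mat k k (\<lambda>(r,a). \<Gamma> $$ (r, j a))"
  have Bc: "B \<in> carrier_mat k k" unfolding B_def by simp
  show "\<forall>x \<in> carrier_vec k. transpose_mat \<Gamma> *\<^sub>v x = 0\<^sub>v n \<longrightarrow> x = 0\<^sub>v k"
  proof (intro ballI impI)
    fix x :: "'a vec" assume x: "x \<in> carrier_vec k" and h: "transpose_mat \<Gamma> *\<^sub>v x = 0\<^sub>v n"
    have BT: "transpose_mat B *\<^sub>v x = 0\<^sub>v k"
    proof (rule eq_vecI)
      fix a assume "a < dim_vec (0\<^sub>v k)"
      then have a: "a < k" by simp
      have "(transpose_mat B *\<^sub>v x) $ a = (transpose_mat \<Gamma> *\<^sub>v x) $ j a"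
        using a j x \<Gamma> unfolding B_def by (simp add: scalar_prod_def col_def)
      then show "(transpose_mat B *\<^sub>v x) $ a = 0\<^sub>v k $ a" using h a j by simp
    qed (use Bc in simp)
    have "x = transpose_mat (B * Binv) *\<^sub>v x" using BB x unfolding B_def by simp
    also have "\<dots> = transpose_mat Binv *\<^sub>v (transpose_mat B *\<^sub>v x)"
      using Bc Bi x by (simp add: transpose_mult assoc_mult_mat_vec[of _ k k _ k])
    also have "\<dots> = 0\<^sub>v k" using BT Bi by (intro eq_vecI) (auto simp: scalar_prod_def)
    finally show "x = 0\<^sub>v k" .
  qed
next
  assume "\<forall>x \<in> carrier_vec k. transpose_mat \<Gamma> *\<^sub>v x = 0\<^sub>v n \<longrightarrow> x = 0\<^sub>v k"
  then show "vec_space.rank k \<Gamma> = k" using gamma_rank_aux[OF \<Gamma>] by blast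
qed

definition Bmat :: "bit mat \<Rightarrow> (nat \<Rightarrow> nat) \<Rightarrow> nat \<Rightarrow> bit mat" where
  "Bmat \<Gamma> j k = mat k k (\<lambda>(r,a). \<Gamma> $$ (r, j a))"

definition mlist :: "nat \<Rightarrow> nat \<Rightarrow> (nat \<Rightarrow> nat) \<Rightarrow> nat list" where
  "mlist n k j = filter (\<lambda>m. m \<notin> j ` {..<k}) [0..<n]"

definition sker :: "nat \<Rightarrow> nat \<Rightarrow> bit mat \<Rightarrow> (nat \<Rightarrow> nat) \<Rightarrow> bit mat \<Rightarrow> nat \<Rightarrow> bit vec" where
  "sker n k \<Gamma> j Binv m = vec n (\<lambda>t. (if t = m then 1 else 0) +
      (\<Sum>a<k. if j a = t then (Binv *\<^sub>v col \<Gamma> m) $ a else 0))"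

lemma col_in_carrier: "A \<in> carrier_mat r c \<Longrightarrow> col A t \<in> carrier_vec r"
  by (rule carrier_vecI) simp

lemma sum_delta_j:
  fixes f :: "nat \<Rightarrow> 'a :: comm_semiring_1"
  assumes "\<forall>a<k. j a < n"
  shows "(\<Sum>t<n. f t * (\<Sum>a<k. if j a = t then w a else 0)) = (\<Sum>a<k. f (j a) * w a)"
proof -
  have "(\<Sum>t<n. f t * (\<Sum>a<k. if j a = t then w a else 0)) = (\<Sum>t<n. \<Sum>a<k. if j a = t then f t * w a else 0)"
    by (simp add: sum_distrib_left if_distrib cong: if_cong)
  also have "\<dots> = (\<Sum>a<k. \<Sum>t<n. if j a = t then f t * w a else 0)" by (rule sum.swap)
  also have "\<dots> = (\<Sum>a<k. f (j a) * w a)"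
    using assms by (intro sum.cong) (auto simp: sum.delta)
  finally show ?thesis .
qed

context
  fixes k n :: nat and \<Gamma> :: "bit mat" and j :: "nat \<Rightarrow> nat" and Binv :: "bit mat"
  assumes \<Gamma>c: "\<Gamma> \<in> carrier_mat k n" and jn: "\<forall>a<k. j a < n" and jinj: "inj_on j {..<k}"
    and Bic: "Binv \<in> carrier_mat k k" and BiB: "Binv * Bmat \<Gamma> j k = 1\<^sub>m k"
    and BBi: "Bmat \<Gamma> j k * Binv = 1\<^sub>m k"
begin

lemma Bc: "Bmat \<Gamma> j k \<in> carrier_mat k k" by (simp add: Bmat_def)

lemma length_mlist: "length (mlist n k j) = n - k"
proof -
  have "length (mlist n k j) = card {m. m < n \<and> m \<notin> j ` {..<k}}"
  proof -
    have "length (mlist n k j) = card (set (mlist n k j))"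
      by (metis distinct_card distinct_filter distinct_upt mlist_def)
    also have "set (mlist n k j) = {m. m < n \<and> m \<notin> j ` {..<k}}" unfolding mlist_def by auto
    finally show ?thesis .
  qed
  also have "{m. m < n \<and> m \<notin> j ` {..<k}} = {..<n} - j ` {..<k}" by auto
  also have "card \<dots> = n - card (j ` {..<k})"
    using jn by (subst card_Diff_subset) auto
  also have "card (j ` {..<k}) = k" using card_image[OF jinj] by simp
  finally show ?thesis .
qed

lemma distinct_mlist: "distinct (mlist n k j)"
  unfolding mlist_def by simp

lemma set_mlist: "set (mlist n k j) = {m. m < n \<and> m \<notin> j ` {..<k}}"
  unfolding mlist_def by auto

lemma sker_carrier: "sker n k \<Gamma> j Binv m \<in> carrier_vec n"
  by (simp add: sker_def)

lemma col_Bmat: "a < k \<Longrightarrow> col (Bmat \<Gamma> j k) a = col \<Gamma> (j a)"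
  using \<Gamma>c jn by (intro eq_vecI) (auto simp: Bmat_def)

lemma sker_index: "t < n \<Longrightarrow> sker n k \<Gamma> j Binv m $ t = (if t = m then 1 else 0) +
      (\<Sum>a<k. if j a = t then (Binv *\<^sub>v col \<Gamma> m) $ a else 0)"
  unfolding sker_def by (rule index_vec)

lemma sum_sker:
  fixes f :: "nat \<Rightarrow> bit"
  assumes m: "m < n"
  shows "(\<Sum>t<n. f t * sker n k \<Gamma> j Binv m $ t) = f m + (\<Sum>a<k. f (j a) * (Binv *\<^sub>v col \<Gamma> m) $ a)"
proof -
  define w where "w = Binv *\<^sub>v col \<Gamma> m"
  have "(\<Sum>t<n. f t * sker n k \<Gamma> j Binv m $ t) = (\<Sum>t<n. f t * (if t = m then 1 else 0) +
      f t * (\<Sum>a<k. if j a = t then w $ a else 0))"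
    by (rule sum.cong[OF refl]) (simp only: sker_index w_def distrib_left lessThan_iff)
  also have "\<dots> = (\<Sum>t<n. f t * (if t = m then 1 else 0)) +
      (\<Sum>t<n. f t * (\<Sum>a<k. if j a = t then w $ a else 0))"
    by (rule sum.distrib)
  also have "(\<Sum>t<n. f t * (if t = m then 1 else 0)) = f m"
  proof -
    have "(\<Sum>t<n. f t * (if t = m then 1 else 0)) = (\<Sum>t<n. if t = m then f t else 0)"
      by (rule sum.cong) auto
    then show ?thesis using m by (simp add: sum.delta')
  qed
  also have "(\<Sum>t<n. f t * (\<Sum>a<k. if j a = t then w $ a else 0)) = (\<Sum>a<k. f (j a) * w $ a)"
    by (rule sum_delta_j[OF jn])
  finally show ?thesis unfolding w_def .
qed

lemma sker_kernel:
  assumes m: "m < n"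
  shows "\<Gamma> *\<^sub>v sker n k \<Gamma> j Binv m = 0\<^sub>v k"
proof (rule eq_vecI)
  fix r assume "r < dim_vec (0\<^sub>v k)"
  then have r: "r < k" by simp
  define w where "w = Binv *\<^sub>v col \<Gamma> m"
  have wc: "w \<in> carrier_vec k" unfolding w_def by (intro carrier_vecI) (use Bic in simp)
  have Bw: "Bmat \<Gamma> j k *\<^sub>v w = col \<Gamma> m"
  proof -
    have "Bmat \<Gamma> j k *\<^sub>v w = (Bmat \<Gamma> j k * Binv) *\<^sub>v col \<Gamma> m"
      unfolding w_def using assoc_mult_mat_vec[OF Bc Bic, of "col \<Gamma> m"] \<Gamma>c by (simp add: carrier_vecI)
    also have "\<dots> = col \<Gamma> m" using BBi one_mult_mat_vec[of "col \<Gamma> m" k] \<Gamma>c by (simp add: carrier_vecI)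
    finally show ?thesis .
  qed
  have e1: "(\<Gamma> *\<^sub>v sker n k \<Gamma> j Binv m) $ r = (\<Sum>t<n. \<Gamma> $$ (r, t) * sker n k \<Gamma> j Binv m $ t)"
    using r \<Gamma>c sker_carrier[of m] by (simp add: scalar_prod_def atLeast0LessThan)
  have e2: "(\<Sum>t<n. \<Gamma> $$ (r, t) * sker n k \<Gamma> j Binv m $ t) = \<Gamma> $$ (r, m) + (\<Sum>a<k. \<Gamma> $$ (r, j a) * w $ a)"
    unfolding w_def by (rule sum_sker[OF m])
  have e3: "(\<Sum>a<k. \<Gamma> $$ (r, j a) * w $ a) = (Bmat \<Gamma> j k *\<^sub>v w) $ r"
    using r wc by (simp add: Bmat_def scalar_prod_def atLeast0LessThan)
  have e4: "\<Gamma> $$ (r, m) + col \<Gamma> m $ r = 0" using r m \<Gamma>c by simp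
  show "(\<Gamma> *\<^sub>v sker n k \<Gamma> j Binv m) $ r = 0\<^sub>v k $ r"
    using e1 e2 e3 e4 Bw r by simp
qed (use \<Gamma>c in simp)

lemma sker_unit:
  assumes "m' < n" "m' \<notin> j ` {..<k}"
  shows "sker n k \<Gamma> j Binv m $ m' = (if m' = m then 1 else 0)"
proof -
  have "(\<Sum>a<k. if j a = m' then (Binv *\<^sub>v col \<Gamma> m) $ a else 0) = 0"
    using assms by (intro sum.neutral) auto
  then show ?thesis using assms by (simp add: sker_def)
qed


lemma annihilator:
  assumes c: "c \<in> carrier_vec n"
    and orth: "\<forall>m \<in> set (mlist n k j). sker n k \<Gamma> j Binv m \<bullet> c = 0"
  shows "\<exists>x \<in> carrier_vec k. c = transpose_mat \<Gamma> *\<^sub>v x"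
proof -
  define cJ where "cJ = vec k (\<lambda>a. c $ j a)"
  define x where "x = transpose_mat Binv *\<^sub>v cJ"
  have cJc: "cJ \<in> carrier_vec k" unfolding cJ_def by simp
  have xc: "x \<in> carrier_vec k" unfolding x_def by (intro carrier_vecI) (use Bic in simp)
  have "c = transpose_mat \<Gamma> *\<^sub>v x"
  proof (rule eq_vecI)
    fix t assume "t < dim_vec (transpose_mat \<Gamma> *\<^sub>v x)"
    then have t: "t < n" using \<Gamma>c by simp
    have rhs: "(transpose_mat \<Gamma> *\<^sub>v x) $ t = col \<Gamma> t \<bullet> x" using t \<Gamma>c by simp
    show "c $ t = (transpose_mat \<Gamma> *\<^sub>v x) $ t"
    proof (cases "t \<in> j ` {..<k}")
      case True
      then obtain b where b: "b < k" "t = j b" by auto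
      have "col \<Gamma> t \<bullet> x = col (Bmat \<Gamma> j k) b \<bullet> x" using col_Bmat[OF b(1)] b by simp
      also have "\<dots> = (transpose_mat (Bmat \<Gamma> j k) *\<^sub>v x) $ b" using b Bc by simp
      also have "transpose_mat (Bmat \<Gamma> j k) *\<^sub>v x = transpose_mat (Binv * Bmat \<Gamma> j k) *\<^sub>v cJ"
        unfolding x_def using Bc Bic cJc
        by (simp add: transpose_mult assoc_mult_mat_vec[of _ k k _ k])
      also have "\<dots> = cJ" using BiB cJc by simp
      finally show ?thesis using rhs b cJ_def by simp
    next
      case False
      then have tm: "t \<in> set (mlist n k j)" using t set_mlist by auto
      define w where "w = Binv *\<^sub>v col \<Gamma> t"
      have wc: "w \<in> carrier_vec k" unfolding w_def by (intro carrier_vecI) (use Bic in simp)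
      have "0 = sker n k \<Gamma> j Binv t \<bullet> c" using orth tm by simp
      also have "\<dots> = (\<Sum>t'<n. c $ t' * sker n k \<Gamma> j Binv t $ t')"
        using c sker_carrier[of t] unfolding scalar_prod_def atLeast0LessThan by (simp add: mult.commute)
      also have "\<dots> = c $ t + (\<Sum>a<k. c $ j a * w $ a)"
        unfolding w_def by (rule sum_sker[OF t])
      finally have s0: "0 = c $ t + (\<Sum>a<k. c $ j a * w $ a)" .
      have s1: "(\<Sum>a<k. c $ j a * w $ a) = w \<bullet> cJ" using wc by (simp add: scalar_prod_def cJ_def atLeast0LessThan mult.commute)
      have e: "c $ t = w \<bullet> cJ" using s0 s1
        by (metis add_right_cancel bit_add_self)
      have "col \<Gamma> t \<bullet> x = x \<bullet> col \<Gamma> t" using xc col_in_carrier[OF \<Gamma>c] by (intro comm_scalar_prod[of _ k]) auto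
      also have "\<dots> = cJ \<bullet> w"
        unfolding x_def w_def using transpose_vec_mult_scalar[OF Bic col_in_carrier[OF \<Gamma>c] cJc] .
      also have "\<dots> = w \<bullet> cJ" using wc cJc by (intro comm_scalar_prod[of _ k]) auto
      finally show ?thesis using rhs e by simp
    qed
  qed (use c \<Gamma>c in simp)
  then show ?thesis using xc by blast
qed

end

lemma tensor_ops_index:
  "i < 2 ^ n \<Longrightarrow> i' < 2 ^ n \<Longrightarrow> tensor_ops n U $$ (i, i') = (\<Prod>j<n. U j $$ (qbit i j, qbit i' j))"
  by (simp add: tensor_ops_def)

lemma tensor_ops_carrier[simp]: "tensor_ops n U \<in> carrier_mat (2 ^ n) (2 ^ n)"
  by (simp add: tensor_ops_def)

lemma tensor_ops_dim[simp]: "dim_row (tensor_ops n U) = 2 ^ n" "dim_col (tensor_ops n U) = 2 ^ n"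
  by (simp_all add: tensor_ops_def)

lemma tensor_ops_cong: "(\<And>j. j < n \<Longrightarrow> U j = V j) \<Longrightarrow> tensor_ops n U = tensor_ops n V"
  unfolding tensor_ops_def by (intro eq_matI) auto

lemma mat_mult_index_sum:
  assumes "A \<in> carrier_mat r m" "B \<in> carrier_mat m c" "i < r" "k < c"
  shows "(A * B) $$ (i, k) = (\<Sum>l<m. A $$ (i, l) * B $$ (l, k))"
  using assms by (simp add: scalar_prod_def atLeast0LessThan)

lemma tensor_mult:
  assumes "\<And>j. j < n \<Longrightarrow> U j \<in> carrier_mat 2 2" "\<And>j. j < n \<Longrightarrow> V j \<in> carrier_mat 2 2"
  shows "tensor_ops n U * tensor_ops n V = tensor_ops n (\<lambda>j. U j * V j)"
proof (rule eq_matI)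
  fix i i'' assume "i < dim_row (tensor_ops n (\<lambda>j. U j * V j))" "i'' < dim_col (tensor_ops n (\<lambda>j. U j * V j))"
  then have i: "i < 2 ^ n" and i'': "i'' < 2 ^ n" by auto
  have "(tensor_ops n U * tensor_ops n V) $$ (i, i'') =
      (\<Sum>i'<2 ^ n. tensor_ops n U $$ (i, i') * tensor_ops n V $$ (i', i''))"
    by (rule mat_mult_index_sum[OF tensor_ops_carrier tensor_ops_carrier i i''])
  also have "\<dots> = (\<Sum>i'<2 ^ n. \<Prod>j<n. U j $$ (qbit i j, qbit i' j) * V j $$ (qbit i' j, qbit i'' j))"
    using i i'' by (simp add: tensor_ops_index prod.distrib)
  also have "\<dots> = (\<Prod>j<n. U j $$ (qbit i j, 0) * V j $$ (0, qbit i'' j) + U j $$ (qbit i j, 1) * V j $$ (1, qbit i'' j))"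
    by (rule sum_prod_bits[where f = "\<lambda>j q. U j $$ (qbit i j, q) * V j $$ (q, qbit i'' j)"])
  also have "\<dots> = (\<Prod>j<n. (U j * V j) $$ (qbit i j, qbit i'' j))"
  proof (rule prod.cong[OF refl])
    fix j assume "j \<in> {..<n}"
    then have j: "j < n" by simp
    show "U j $$ (qbit i j, 0) * V j $$ (0, qbit i'' j) + U j $$ (qbit i j, 1) * V j $$ (1, qbit i'' j)
        = (U j * V j) $$ (qbit i j, qbit i'' j)"
      using mat_mult_index_sum[OF assms(1)[OF j] assms(2)[OF j] qbit_less2 qbit_less2]
      by (simp add: numeral_2_eq_2 lessThan_Suc)
  qed
  also have "\<dots> = tensor_ops n (\<lambda>j. U j * V j) $$ (i, i'')"
    using i i'' by (simp add: tensor_ops_index)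
  finally show "(tensor_ops n U * tensor_ops n V) $$ (i, i'') = tensor_ops n (\<lambda>j. U j * V j) $$ (i, i'')" .
qed auto

lemma mat_adjoint_carrier[simp]: "A \<in> carrier_mat r c \<Longrightarrow> mat_adjoint A \<in> carrier_mat c r"
  by (intro carrier_matI) (auto simp: mat_adjoint_def)

lemma mat_adjoint_dim[simp]: "dim_row (mat_adjoint A) = dim_col A" "dim_col (mat_adjoint A) = dim_row A"
  by (simp_all add: mat_adjoint_def)

lemma mat_adjoint_index:
  "i < dim_col A \<Longrightarrow> j < dim_row A \<Longrightarrow> mat_adjoint A $$ (i, j) = cnj (A $$ (j, i))"
  by (simp add: mat_adjoint_def mat_of_rows_def)

lemma tensor_adjoint:
  assumes "\<And>j. j < n \<Longrightarrow> U j \<in> carrier_mat 2 2"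
  shows "mat_adjoint (tensor_ops n U) = tensor_ops n (\<lambda>j. mat_adjoint (U j))"
proof (rule eq_matI)
  fix i i' assume "i < dim_row (tensor_ops n (\<lambda>j. mat_adjoint (U j)))" "i' < dim_col (tensor_ops n (\<lambda>j. mat_adjoint (U j)))"
  then have i: "i < 2 ^ n" and i': "i' < 2 ^ n" by auto
  have "mat_adjoint (tensor_ops n U) $$ (i, i') = cnj (\<Prod>j<n. U j $$ (qbit i' j, qbit i j))"
    using i i' by (simp add: mat_adjoint_index tensor_ops_index)
  also have "\<dots> = (\<Prod>j<n. cnj (U j $$ (qbit i' j, qbit i j)))" by simp
  also have "\<dots> = (\<Prod>j<n. mat_adjoint (U j) $$ (qbit i j, qbit i' j))"
    using assms by (intro prod.cong refl) (metis mat_adjoint_index carrier_matD qbit_less2 lessThan_iff)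
  finally show "mat_adjoint (tensor_ops n U) $$ (i, i') = tensor_ops n (\<lambda>j. mat_adjoint (U j)) $$ (i, i')"
    using i i' by (simp add: tensor_ops_index)
qed auto

lemma tensor_one: "tensor_ops n (\<lambda>_. 1\<^sub>m 2) = 1\<^sub>m (2 ^ n)"
proof (rule eq_matI)
  fix i i' assume "i < dim_row (1\<^sub>m (2 ^ n) :: complex mat)" "i' < dim_col (1\<^sub>m (2 ^ n) :: complex mat)"
  then have i: "i < 2 ^ n" and i': "i' < 2 ^ n" by auto
  have "tensor_ops n (\<lambda>_. 1\<^sub>m 2) $$ (i, i') = (\<Prod>j<n. if qbit i j = qbit i' j then 1 else 0 :: complex)"
    using i i' by (simp add: tensor_ops_index)
  also have "\<dots> = (if i = i' then 1 else 0)"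
  proof (cases "i = i'")
    case False
    then obtain j where "j < n" "qbit i j \<noteq> qbit i' j" using bits_inj[OF i i'] by blast
    then show ?thesis using False by (auto intro!: prod_zero bexI[of _ j])
  qed simp
  finally show "tensor_ops n (\<lambda>_. 1\<^sub>m 2) $$ (i, i') = (1\<^sub>m (2 ^ n) :: complex mat) $$ (i, i')"
    using i i' by simp
qed auto

lemma tensor_smult:
  assumes "\<And>j. j < n \<Longrightarrow> M j \<in> carrier_mat 2 2"
  shows "tensor_ops n (\<lambda>j. c j \<cdot>\<^sub>m M j) = (\<Prod>j<n. c j) \<cdot>\<^sub>m tensor_ops n M"
proof (rule eq_matI)
  fix i i' assume "i < dim_row ((\<Prod>j<n. c j) \<cdot>\<^sub>m tensor_ops n M)" "i' < dim_col ((\<Prod>j<n. c j) \<cdot>\<^sub>m tensor_ops n M)"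
  then have i: "i < 2 ^ n" and i': "i' < 2 ^ n" by auto
  have "(\<Prod>j<n. (c j \<cdot>\<^sub>m M j) $$ (qbit i j, qbit i' j)) = (\<Prod>j<n. c j * M j $$ (qbit i j, qbit i' j))"
    using assms by (intro prod.cong refl) (metis index_smult_mat(1) carrier_matD qbit_less2 lessThan_iff)
  then show "tensor_ops n (\<lambda>j. c j \<cdot>\<^sub>m M j) $$ (i, i') = ((\<Prod>j<n. c j) \<cdot>\<^sub>m tensor_ops n M) $$ (i, i')"
    using i i' by (simp add: tensor_ops_index prod.distrib)
qed auto

lemma tensor_ops_1:
  assumes "U 0 \<in> carrier_mat 2 2"
  shows "tensor_ops 1 U = U 0"
  using assms by (intro eq_matI) (auto simp: tensor_ops_def qbit_small)

lemma unitary_right: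
  assumes "unitary_mat d U"
  shows "U * mat_adjoint U = 1\<^sub>m d"
  using assms mat_mult_left_right_inverse[of "mat_adjoint U" d U] unfolding unitary_mat_def
  by auto

lemma tensor_unitary:
  assumes "\<And>j. j < n \<Longrightarrow> unitary_mat 2 (U j)"
  shows "unitary_mat (2 ^ n) (tensor_ops n U)"
proof -
  have c: "\<And>j. j < n \<Longrightarrow> U j \<in> carrier_mat 2 2" using assms unfolding unitary_mat_def by auto
  have "mat_adjoint (tensor_ops n U) * tensor_ops n U = tensor_ops n (\<lambda>j. mat_adjoint (U j) * U j)"
    using c by (simp add: tensor_adjoint tensor_mult)
  also have "\<dots> = tensor_ops n (\<lambda>_. 1\<^sub>m 2)"
    using assms unfolding unitary_mat_def by (intro tensor_ops_cong) auto
  finally show ?thesis unfolding unitary_mat_def by (simp add: tensor_one)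
qed

lemma pauli_X_carrier[simp]: "pauli_X \<in> carrier_mat 2 2"
  by (intro carrier_matI) (simp_all add: pauli_X_def mat_of_rows_list_def)

lemma pauli_Z_carrier[simp]: "pauli_Z \<in> carrier_mat 2 2"
  by (intro carrier_matI) (simp_all add: pauli_Z_def mat_of_rows_list_def)

lemma XZ_carrier[simp]: "pauli_X ^\<^sub>m a * pauli_Z ^\<^sub>m b \<in> carrier_mat 2 2"
  by (meson mult_carrier_mat pauli_X_carrier pauli_Z_carrier pow_carrier_mat)

lemma smult_smult_mat: "a \<cdot>\<^sub>m (b \<cdot>\<^sub>m A) = (a * b) \<cdot>\<^sub>m (A :: 'a :: semiring_0 mat)"
  by (intro eq_matI) (auto simp: mult.assoc)

lemma pauli1_form:
  assumes "M \<in> pauli_group 1"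
  shows "\<exists>c a b. M = (\<i> ^ c) \<cdot>\<^sub>m (pauli_X ^\<^sub>m a * pauli_Z ^\<^sub>m b)"
proof -
  obtain c a b where M: "M = (\<i> ^ c) \<cdot>\<^sub>m tensor_ops 1 (\<lambda>j. pauli_X ^\<^sub>m a j * pauli_Z ^\<^sub>m b j)"
    using assms unfolding pauli_group_def by blast
  then show ?thesis by (subst (asm) tensor_ops_1) auto
qed

lemma XZ_in_pauli1: "pauli_X ^\<^sub>m a * pauli_Z ^\<^sub>m b \<in> pauli_group 1"
proof -
  have "pauli_X ^\<^sub>m a * pauli_Z ^\<^sub>m b = (\<i> ^ 0) \<cdot>\<^sub>m tensor_ops 1 (\<lambda>j. pauli_X ^\<^sub>m (\<lambda>_. a) j * pauli_Z ^\<^sub>m (\<lambda>_. b) j)"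
    by (subst tensor_ops_1) auto
  then show ?thesis unfolding pauli_group_def
    by (intro CollectI exI[of _ 0] exI[of _ "\<lambda>_. a"] exI[of _ "\<lambda>_. b"]) simp
qed

lemma pauli_group_carrier: "P \<in> pauli_group n \<Longrightarrow> P \<in> carrier_mat (2 ^ n) (2 ^ n)"
  unfolding pauli_group_def by auto

lemma conj_tensor:
  assumes U: "\<And>j. j < n \<Longrightarrow> U j \<in> carrier_mat 2 2" and W: "\<And>j. j < n \<Longrightarrow> W j \<in> carrier_mat 2 2"
  shows "tensor_ops n U * tensor_ops n W * mat_adjoint (tensor_ops n U)
     = tensor_ops n (\<lambda>j. U j * W j * mat_adjoint (U j))"
proof -
  have "tensor_ops n U * tensor_ops n W = tensor_ops n (\<lambda>j. U j * W j)" using U W by (rule tensor_mult)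
  moreover have "mat_adjoint (tensor_ops n U) = tensor_ops n (\<lambda>j. mat_adjoint (U j))" using U by (rule tensor_adjoint)
  moreover have "tensor_ops n (\<lambda>j. U j * W j) * tensor_ops n (\<lambda>j. mat_adjoint (U j))
      = tensor_ops n (\<lambda>j. U j * W j * mat_adjoint (U j))"
    by (rule tensor_mult) (use U W in \<open>auto intro: mult_carrier_mat\<close>)
  ultimately show ?thesis by simp
qed

lemma conj_pauli:
  assumes cl: "\<forall>j<n. clifford 1 (U j)" and P: "P \<in> pauli_group n"
  shows "tensor_ops n U * P * mat_adjoint (tensor_ops n U) \<in> pauli_group n"
proof -
  have Uc: "\<And>j. j < n \<Longrightarrow> U j \<in> carrier_mat 2 2"
    using cl unfolding clifford_def unitary_mat_def by auto
  obtain c a b where Pe: "P = (\<i> ^ c) \<cdot>\<^sub>m tensor_ops n (\<lambda>j. pauli_X ^\<^sub>m a j * pauli_Z ^\<^sub>m b j)"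
    using P unfolding pauli_group_def by blast
  define W where "W = (\<lambda>j. pauli_X ^\<^sub>m a j * pauli_Z ^\<^sub>m b j)"
  have Wc: "\<And>j. W j \<in> carrier_mat 2 2" unfolding W_def by simp
  have "\<forall>j. \<exists>cab. j < n \<longrightarrow> U j * W j * mat_adjoint (U j) = (\<i> ^ fst cab) \<cdot>\<^sub>m (pauli_X ^\<^sub>m fst (snd cab) * pauli_Z ^\<^sub>m snd (snd cab))"
  proof (intro allI)
    fix j
    show "\<exists>cab. j < n \<longrightarrow> U j * W j * mat_adjoint (U j) = (\<i> ^ fst cab) \<cdot>\<^sub>m (pauli_X ^\<^sub>m fst (snd cab) * pauli_Z ^\<^sub>m snd (snd cab))"
    proof (cases "j < n")
      case True
      have "U j * W j * mat_adjoint (U j) \<in> pauli_group 1"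
        using cl True XZ_in_pauli1[of "a j" "b j"] unfolding clifford_def W_def by blast
      then obtain c' a' b' where "U j * W j * mat_adjoint (U j) = (\<i> ^ c') \<cdot>\<^sub>m (pauli_X ^\<^sub>m a' * pauli_Z ^\<^sub>m b')"
        using pauli1_form by blast
      then show ?thesis by (intro exI[of _ "(c', a', b')"]) auto
    qed auto
  qed
  then obtain f where f: "\<And>j. j < n \<Longrightarrow> U j * W j * mat_adjoint (U j) = (\<i> ^ fst (f j)) \<cdot>\<^sub>m (pauli_X ^\<^sub>m fst (snd (f j)) * pauli_Z ^\<^sub>m snd (snd (f j)))"
    by metis
  define L where "L = tensor_ops n U"
  have Lc: "L \<in> carrier_mat (2^n) (2^n)" unfolding L_def by simp
  have Tc: "tensor_ops n W \<in> carrier_mat (2^n) (2^n)" by simp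
  have "L * P * mat_adjoint L = (\<i> ^ c) \<cdot>\<^sub>m (L * tensor_ops n W * mat_adjoint L)"
  proof -
    have "L * P = (\<i> ^ c) \<cdot>\<^sub>m (L * tensor_ops n W)"
      unfolding Pe W_def[symmetric] by (rule mult_smult_distrib[OF Lc Tc])
    moreover have "((\<i> ^ c) \<cdot>\<^sub>m (L * tensor_ops n W)) * mat_adjoint L = (\<i> ^ c) \<cdot>\<^sub>m (L * tensor_ops n W * mat_adjoint L)"
      by (rule mult_smult_assoc_mat) (use Lc in auto)
    ultimately show ?thesis by simp
  qed
  also have "L * tensor_ops n W * mat_adjoint L = tensor_ops n (\<lambda>j. U j * W j * mat_adjoint (U j))"
    unfolding L_def using Uc Wc by (rule conj_tensor)
  also have "\<dots> = tensor_ops n (\<lambda>j. (\<i> ^ fst (f j)) \<cdot>\<^sub>m (pauli_X ^\<^sub>m fst (snd (f j)) * pauli_Z ^\<^sub>m snd (snd (f j))))"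
    by (rule tensor_ops_cong) (rule f)
  also have "\<dots> = (\<Prod>j<n. \<i> ^ fst (f j)) \<cdot>\<^sub>m tensor_ops n (\<lambda>j. pauli_X ^\<^sub>m fst (snd (f j)) * pauli_Z ^\<^sub>m snd (snd (f j)))"
    by (rule tensor_smult) simp
  also have "(\<Prod>j<n. \<i> ^ fst (f j)) = \<i> ^ (\<Sum>j<n. fst (f j))"
    by (simp add: power_sum)
  finally have "L * P * mat_adjoint L = (\<i> ^ (c + (\<Sum>j<n. fst (f j)))) \<cdot>\<^sub>m
      tensor_ops n (\<lambda>j. pauli_X ^\<^sub>m (\<lambda>j. fst (snd (f j))) j * pauli_Z ^\<^sub>m (\<lambda>j. snd (snd (f j))) j)"
    by (simp add: smult_smult_mat power_add)
  then show ?thesis unfolding L_def pauli_group_def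
    by (intro CollectI exI[of _ "c + (\<Sum>j<n. fst (f j))"] exI[of _ "\<lambda>j. fst (snd (f j))"] exI[of _ "\<lambda>j. snd (snd (f j))"]) simp
qed

lemma gen_group_carrier:
  assumes "A \<subseteq> carrier_mat (2 ^ n) (2 ^ n)"
  shows "M \<in> gen_group n A \<Longrightarrow> M \<in> carrier_mat (2 ^ n) (2 ^ n)"
  by (induction rule: gen_group.induct) (use assms in auto)

context
  fixes d :: nat and L :: "complex mat"
  assumes L: "unitary_mat d L"
begin

lemma Lc: "L \<in> carrier_mat d d" using L unfolding unitary_mat_def by simp
lemma Lac: "mat_adjoint L \<in> carrier_mat d d" using Lc by simp
lemma LaL: "mat_adjoint L * L = 1\<^sub>m d" using L unfolding unitary_mat_def by simp
lemma LLa: "L * mat_adjoint L = 1\<^sub>m d" using unitary_right[OF L] .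

lemma conj_mult:
  assumes a: "a \<in> carrier_mat d d" and b: "b \<in> carrier_mat d d"
  shows "(L * a * mat_adjoint L) * (L * b * mat_adjoint L) = L * (a * b) * mat_adjoint L"
proof -
  have "(L * a * mat_adjoint L) * (L * b * mat_adjoint L) = L * a * (mat_adjoint L * L) * b * mat_adjoint L"
    using Lc Lac a b by (simp add: assoc_mult_mat[of _ d d _ d _ d] mult_carrier_mat[of _ d d _ d])
  also have "\<dots> = L * (a * b) * mat_adjoint L"
    using Lc Lac a b LaL by (simp add: assoc_mult_mat[of _ d d _ d _ d] mult_carrier_mat[of _ d d _ d])
  finally show ?thesis .
qed

lemma conj_one: "L * 1\<^sub>m d * mat_adjoint L = 1\<^sub>m d"
  using Lc LLa by simp

lemma conj_inv:
  assumes a: "a \<in> carrier_mat d d"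
  shows "mat_adjoint L * (L * a * mat_adjoint L) * L = a"
proof -
  have "mat_adjoint L * (L * a * mat_adjoint L) * L = (mat_adjoint L * L) * a * (mat_adjoint L * L)"
    using Lc Lac a by (simp add: assoc_mult_mat[of _ d d _ d _ d] mult_carrier_mat[of _ d d _ d])
  then show ?thesis using LaL a by simp
qed

lemma conj_inj:
  assumes "a \<in> carrier_mat d d" "b \<in> carrier_mat d d" "L * a * mat_adjoint L = L * b * mat_adjoint L"
  shows "a = b"
proof -
  have "a = mat_adjoint L * (L * a * mat_adjoint L) * L" using conj_inv[OF assms(1)] by (rule sym)
  also have "\<dots> = mat_adjoint L * (L * b * mat_adjoint L) * L" by (simp only: assms(3))
  also have "\<dots> = b" by (rule conj_inv[OF assms(2)])
  finally show ?thesis .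
qed

lemma minus_one_smult: "- 1\<^sub>m d = (-1 :: complex) \<cdot>\<^sub>m 1\<^sub>m d"
  by (intro eq_matI) auto

lemma conj_minus_one: "L * (- 1\<^sub>m d) * mat_adjoint L = - 1\<^sub>m d"
proof -
  have e1: "L * ((-1 :: complex) \<cdot>\<^sub>m 1\<^sub>m d) = (-1) \<cdot>\<^sub>m (L * 1\<^sub>m d)"
    by (rule mult_smult_distrib[OF Lc one_carrier_mat])
  have e2: "((-1 :: complex) \<cdot>\<^sub>m (L * 1\<^sub>m d)) * mat_adjoint L = (-1) \<cdot>\<^sub>m (L * 1\<^sub>m d * mat_adjoint L)"
    by (rule mult_smult_assoc_mat[OF _ Lac]) (use Lc in simp)
  have "L * (- 1\<^sub>m d) * mat_adjoint L = (-1 :: complex) \<cdot>\<^sub>m (L * 1\<^sub>m d * mat_adjoint L)"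
    by (simp only: minus_one_smult e1 e2)
  also have "\<dots> = (-1 :: complex) \<cdot>\<^sub>m 1\<^sub>m d" by (simp only: conj_one)
  also have "\<dots> = - 1\<^sub>m d" by (rule minus_one_smult[symmetric])
  finally show ?thesis .
qed

end

context
  fixes n :: nat and L :: "complex mat"
  assumes L: "unitary_mat (2 ^ n) L"
begin

abbreviation cj where "cj M \<equiv> L * M * mat_adjoint L"

lemma gen_conj:
  assumes A: "A \<subseteq> carrier_mat (2 ^ n) (2 ^ n)"
  shows "gen_group n (cj ` A) = cj ` gen_group n A"
proof
  show "gen_group n (cj ` A) \<subseteq> cj ` gen_group n A"
  proof
    fix M assume "M \<in> gen_group n (cj ` A)"
    then show "M \<in> cj ` gen_group n A"
    proof (induction rule: gen_group.induct)
      case gen_one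
      have "cj (1\<^sub>m (2 ^ n)) = 1\<^sub>m (2 ^ n)" by (rule conj_one[OF L])
      then show ?case using gen_group.gen_one by (metis image_eqI)
    next
      case (gen_mult g h)
      then obtain a h' where a: "a \<in> A" "g = cj a" and h': "h' \<in> gen_group n A" "h = cj h'" by blast
      have "g * h = cj (a * h')"
        using conj_mult[OF L, of a h'] a h' A gen_group_carrier[OF A h'(1)] by auto
      then show ?case using gen_group.gen_mult[OF a(1) h'(1)] by blast
    qed
  qed
next
  show "cj ` gen_group n A \<subseteq> gen_group n (cj ` A)"
  proof
    fix M assume "M \<in> cj ` gen_group n A"
    then obtain M' where M': "M' \<in> gen_group n A" "M = cj M'" by blast
    from M'(1) have "cj M' \<in> gen_group n (cj ` A)"
    proof (induction rule: gen_group.induct)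
      case gen_one
      then show ?case using conj_one[OF L] gen_group.gen_one by metis
    next
      case (gen_mult g h)
      have "cj (g * h) = cj g * cj h"
        using conj_mult[OF L, of g h] gen_mult A gen_group_carrier[OF A gen_mult(2)] by auto
      moreover have "cj g \<in> cj ` A" using gen_mult(1) by blast
      ultimately show ?case using gen_group.gen_mult[OF _ gen_mult.IH] by metis
    qed
    then show "M \<in> gen_group n (cj ` A)" using M' by simp
  qed
qed

lemma codespace_conj:
  assumes S: "S \<subseteq> carrier_mat (2 ^ n) (2 ^ n)"
  shows "codespace n (cj ` S) = (\<lambda>v. L *\<^sub>v v) ` codespace n S"
proof
  have Lc: "L \<in> carrier_mat (2^n) (2^n)" using Lc[OF L] .
  have Lac: "mat_adjoint L \<in> carrier_mat (2^n) (2^n)" using Lc by simp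
  show "codespace n (cj ` S) \<subseteq> (\<lambda>v. L *\<^sub>v v) ` codespace n S"
  proof
    fix v assume v: "v \<in> codespace n (cj ` S)"
    then have vc: "v \<in> carrier_vec (2^n)" and fx: "\<And>s. s \<in> S \<Longrightarrow> cj s *\<^sub>v v = v"
      unfolding codespace_def by auto
    define w where "w = mat_adjoint L *\<^sub>v v"
    have wc: "w \<in> carrier_vec (2^n)" unfolding w_def using Lac vc by simp
    have "L *\<^sub>v w = v" unfolding w_def using Lc Lac vc LLa[OF L]
      by (simp add: assoc_mult_mat_vec[symmetric, of _ "2^n" "2^n" _ "2^n"])
    moreover have "w \<in> codespace n S"
      unfolding codespace_def
    proof (intro CollectI conjI ballI wc)
      fix s assume s: "s \<in> S"
      have sc: "s \<in> carrier_mat (2^n) (2^n)" using s S by auto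
      have "s *\<^sub>v w = mat_adjoint L *\<^sub>v (cj s *\<^sub>v v)"
      proof -
        have Ls: "L * s \<in> carrier_mat (2^n) (2^n)" using Lc sc by simp
        have swc: "s *\<^sub>v w \<in> carrier_vec (2^n)" using sc wc by simp
        have "cj s *\<^sub>v v = (L * s) *\<^sub>v w"
          unfolding w_def by (rule assoc_mult_mat_vec[OF Ls Lac vc])
        also have "\<dots> = L *\<^sub>v (s *\<^sub>v w)" by (rule assoc_mult_mat_vec[OF Lc sc wc])
        finally have "mat_adjoint L *\<^sub>v (cj s *\<^sub>v v) = mat_adjoint L *\<^sub>v (L *\<^sub>v (s *\<^sub>v w))" by simp
        also have "\<dots> = (mat_adjoint L * L) *\<^sub>v (s *\<^sub>v w)" by (rule assoc_mult_mat_vec[OF Lac Lc swc, symmetric])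
        finally have "mat_adjoint L *\<^sub>v (cj s *\<^sub>v v) = (mat_adjoint L * L) *\<^sub>v (s *\<^sub>v w)" .
        then show ?thesis using LaL[OF L] sc wc by simp
      qed
      also have "\<dots> = w" using fx[OF s] w_def by simp
      finally show "s *\<^sub>v w = w" .
    qed
    ultimately show "v \<in> (\<lambda>v. L *\<^sub>v v) ` codespace n S" by blast
  qed
next
  have Lc: "L \<in> carrier_mat (2^n) (2^n)" using Lc[OF L] .
  have Lac: "mat_adjoint L \<in> carrier_mat (2^n) (2^n)" using Lc by simp
  show "(\<lambda>v. L *\<^sub>v v) ` codespace n S \<subseteq> codespace n (cj ` S)"
  proof
    fix v assume "v \<in> (\<lambda>v. L *\<^sub>v v) ` codespace n S"
    then obtain w where w: "w \<in> codespace n S" "v = L *\<^sub>v w" by blast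
    then have wc: "w \<in> carrier_vec (2^n)" and fx: "\<And>s. s \<in> S \<Longrightarrow> s *\<^sub>v w = w"
      unfolding codespace_def by auto
    show "v \<in> codespace n (cj ` S)"
      unfolding codespace_def
    proof (intro CollectI conjI ballI)
      show "v \<in> carrier_vec (2^n)" using w(2) Lc wc by simp
      fix t assume "t \<in> cj ` S"
      then obtain s where s: "s \<in> S" "t = cj s" by blast
      have sc: "s \<in> carrier_mat (2^n) (2^n)" using s S by auto
      have Ls: "L * s \<in> carrier_mat (2^n) (2^n)" using Lc sc by simp
      have Lw: "L *\<^sub>v w \<in> carrier_vec (2^n)" using Lc wc by simp
      have LaLw: "mat_adjoint L *\<^sub>v (L *\<^sub>v w) \<in> carrier_vec (2^n)" using Lac Lw by simp
      have "t *\<^sub>v v = (L * s) *\<^sub>v (mat_adjoint L *\<^sub>v (L *\<^sub>v w))"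
        unfolding s(2) w(2) by (rule assoc_mult_mat_vec[OF Ls Lac Lw])
      also have "\<dots> = L *\<^sub>v (s *\<^sub>v (mat_adjoint L *\<^sub>v (L *\<^sub>v w)))"
        by (rule assoc_mult_mat_vec[OF Lc sc LaLw])
      also have "mat_adjoint L *\<^sub>v (L *\<^sub>v w) = (mat_adjoint L * L) *\<^sub>v w"
        by (rule assoc_mult_mat_vec[OF Lac Lc wc, symmetric])
      also have "(mat_adjoint L * L) *\<^sub>v w = w" using LaL[OF L] wc by simp
      also have "s *\<^sub>v w = w" by (rule fx[OF s(1)])
      also have "L *\<^sub>v w = v" using w(2) by simp
      finally show "t *\<^sub>v v = v" .
    qed
  qed
qed

lemma stab_conj:
  assumes st: "stabilizer_group n k S"
    and pres: "\<And>P. P \<in> pauli_group n \<Longrightarrow> cj P \<in> pauli_group n"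
  shows "stabilizer_group n k (cj ` S)"
proof -
  obtain gs where gs: "length gs = n - k" "set gs \<subseteq> pauli_group n" "S = gen_group n (set gs)"
    and ind: "\<forall>i < length gs. gs ! i \<notin> gen_group n (set gs - {gs ! i})"
    and comm: "\<forall>g\<in>S. \<forall>h\<in>S. g * h = h * g" and neg: "- 1\<^sub>m (2 ^ n) \<notin> S"
    using st unfolding stabilizer_group_def by blast
  have gc: "set gs \<subseteq> carrier_mat (2^n) (2^n)" using gs(2) pauli_group_carrier by blast
  have Sc: "S \<subseteq> carrier_mat (2^n) (2^n)" using gen_group_carrier[OF gc] gs(3) by blast
  define hs where "hs = map cj gs"
  have "length hs = n - k" using gs(1) hs_def by simp
  moreover have "set hs \<subseteq> pauli_group n" using gs(2) pres hs_def by auto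
  moreover have hsS: "cj ` S = gen_group n (set hs)" unfolding hs_def gs(3) using gen_conj[OF gc] by simp
  moreover have "\<forall>i < length hs. hs ! i \<notin> gen_group n (set hs - {hs ! i})"
  proof (intro allI impI notI)
    fix i assume i: "i < length hs" and mem: "hs ! i \<in> gen_group n (set hs - {hs ! i})"
    have i': "i < length gs" using i hs_def by simp
    have gic: "gs ! i \<in> carrier_mat (2^n) (2^n)" using gc i' by auto
    have "set hs - {hs ! i} = cj ` (set gs - {gs ! i})"
    proof -
      have "inj_on cj (set gs)" using conj_inj[OF L] gc by (auto intro!: inj_onI)
      then show ?thesis unfolding hs_def using i' by (simp add: inj_on_image_set_diff[of _ "set gs"])
    qed
    moreover have "set gs - {gs ! i} \<subseteq> carrier_mat (2^n) (2^n)" using gc by auto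
    ultimately have "hs ! i \<in> cj ` gen_group n (set gs - {gs ! i})" using mem gen_conj by simp
    then obtain M where M: "M \<in> gen_group n (set gs - {gs ! i})" "cj (gs ! i) = cj M"
      using hs_def i' by auto
    have "M \<in> carrier_mat (2^n) (2^n)" using gen_group_carrier[of "set gs - {gs ! i}" n] gc M(1) by blast
    then have "gs ! i = M" using conj_inj[OF L gic _ M(2)] by simp
    then show False using ind i' M(1) by auto
  qed
  moreover have "\<forall>g\<in>cj ` S. \<forall>h\<in>cj ` S. g * h = h * g"
  proof (intro ballI)
    fix g h assume "g \<in> cj ` S" "h \<in> cj ` S"
    then obtain a b where ab: "a \<in> S" "b \<in> S" "g = cj a" "h = cj b" by blast
    have "g * h = cj (a * b)" using ab conj_mult[OF L] Sc by auto
    also have "\<dots> = cj (b * a)" using comm ab by simp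
    also have "\<dots> = h * g"
    proof -
      have "a \<in> carrier_mat (2^n) (2^n)" "b \<in> carrier_mat (2^n) (2^n)" using ab Sc by auto
      then show ?thesis using conj_mult[OF L, of b a] ab by simp
    qed
    finally show "g * h = h * g" .
  qed
  moreover have "- 1\<^sub>m (2 ^ n) \<notin> cj ` S"
  proof
    assume "- 1\<^sub>m (2 ^ n) \<in> cj ` S"
    then obtain a where a: "a \<in> S" "- 1\<^sub>m (2 ^ n) = cj a" by blast
    have "cj (- 1\<^sub>m (2 ^ n)) = cj a" using conj_minus_one[OF L] a(2) by (rule trans)
    moreover have "- 1\<^sub>m (2 ^ n) \<in> carrier_mat (2^n) (2^n)" by simp
    moreover have "a \<in> carrier_mat (2^n) (2^n)" using a Sc by auto
    ultimately have "- 1\<^sub>m (2 ^ n) = a" using conj_inj[OF L] by blast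
    then show False using a neg by simp
  qed
  ultimately show ?thesis unfolding stabilizer_group_def by blast
qed

end

definition ebound :: "nat \<Rightarrow> (nat \<times> nat) list \<Rightarrow> bool" where
  "ebound n E \<longleftrightarrow> (\<forall>e \<in> set E. fst e < n \<and> snd e < n)"

definition Qf :: "(nat \<times> nat) list \<Rightarrow> bit vec \<Rightarrow> bit" where
  "Qf E y = sum_list (map (\<lambda>(u,v). y $ u * y $ v) E)"

definition nbv :: "nat \<Rightarrow> (nat \<times> nat) list \<Rightarrow> bit vec \<Rightarrow> bit vec" where
  "nbv n E s = vec n (\<lambda>t. sum_list (map (\<lambda>(u,v). (if u = t then s $ v else 0) + (if v = t then s $ u else 0)) E))"

lemma nbv_carrier[simp]: "nbv n E s \<in> carrier_vec n"
  by (simp add: nbv_def)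

lemma dim_nbv[simp]: "dim_vec (nbv n E s) = n"
  by (simp add: nbv_def)

lemma sum_sum_list: "(\<Sum>t\<in>A. sum_list (map (f t) E)) = sum_list (map (\<lambda>e. \<Sum>t\<in>A. f t e) E)"
  by (induction E) (auto simp: sum.distrib)

lemma sum_list_pair_add:
  "sum_list (map (\<lambda>(u,v). f u v + g u v) E) = sum_list (map (\<lambda>(u,v). f u v) E) + sum_list (map (\<lambda>(u,v). g u v) E)"
  for f g :: "nat \<Rightarrow> nat \<Rightarrow> 'a :: comm_monoid_add"
  by (induction E) (auto simp: ac_simps)

lemma dot_nbv:
  assumes E: "ebound n E" and y: "y \<in> carrier_vec n"
  shows "y \<bullet> nbv n E s = sum_list (map (\<lambda>(u,v). y $ u * s $ v + y $ v * s $ u) E)"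
proof -
  have "y \<bullet> nbv n E s = (\<Sum>t<n. y $ t * sum_list (map (\<lambda>(u,v). (if u = t then s $ v else 0) + (if v = t then s $ u else 0)) E))"
    by (simp add: scalar_prod_def nbv_def atLeast0LessThan)
  also have "\<dots> = (\<Sum>t<n. sum_list (map (\<lambda>e. y $ t * (case e of (u,v) \<Rightarrow> (if u = t then s $ v else 0) + (if v = t then s $ u else 0))) E))"
    by (simp add: sum_list_const_mult[symmetric] o_def case_prod_beta)
  also have "\<dots> = sum_list (map (\<lambda>e. \<Sum>t<n. y $ t * (case e of (u,v) \<Rightarrow> (if u = t then s $ v else 0) + (if v = t then s $ u else 0))) E)"
    by (rule sum_sum_list)
  also have "\<dots> = sum_list (map (\<lambda>(u,v). y $ u * s $ v + y $ v * s $ u) E)"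
  proof (rule arg_cong[where f = sum_list], rule map_cong[OF refl])
    fix e assume e: "e \<in> set E"
    obtain u v where uv: "e = (u, v)" by force
    have u: "u < n" and v: "v < n" using E e uv unfolding ebound_def by auto
    have "(\<Sum>t<n. y $ t * ((if u = t then s $ v else 0) + (if v = t then s $ u else 0)))
        = (\<Sum>t<n. (if u = t then y $ t * s $ v else 0)) + (\<Sum>t<n. (if v = t then y $ t * s $ u else 0))"
    proof -
      have "\<And>t. y $ t * ((if u = t then s $ v else 0) + (if v = t then s $ u else 0)) =
          (if u = t then y $ t * s $ v else 0) + (if v = t then y $ t * s $ u else 0)"
        by (simp add: distrib_left)
      then show ?thesis by (simp add: sum.distrib)
    qed
    also have "\<dots> = y $ u * s $ v + y $ v * s $ u" using u v by (simp add: sum.delta)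
    finally show "(\<Sum>t<n. y $ t * (case e of (u,v) \<Rightarrow> (if u = t then s $ v else 0) + (if v = t then s $ u else 0)))
        = (case e of (u, v) \<Rightarrow> y $ u * s $ v + y $ v * s $ u)" using uv by simp
  qed
  finally show ?thesis .
qed

lemma Q_add:
  assumes E: "ebound n E" and y: "y \<in> carrier_vec n" and s: "s \<in> carrier_vec n"
  shows "Qf E (y + s) = Qf E y + Qf E s + y \<bullet> nbv n E s"
proof -
  have "Qf E (y + s) = sum_list (map (\<lambda>(u,v). y $ u * y $ v + s $ u * s $ v + (y $ u * s $ v + y $ v * s $ u)) E)"
    unfolding Qf_def
  proof (rule arg_cong[where f = sum_list], rule map_cong[OF refl])
    fix e assume e: "e \<in> set E"
    obtain u v where uv: "e = (u, v)" by force
    have u: "u < n" and v: "v < n" using E e uv unfolding ebound_def by auto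
    show "(case e of (u, v) \<Rightarrow> (y + s) $ u * (y + s) $ v) =
        (case e of (u, v) \<Rightarrow> y $ u * y $ v + s $ u * s $ v + (y $ u * s $ v + y $ v * s $ u))"
      using uv u v y s by (simp add: algebra_simps)
  qed
  also have "\<dots> = Qf E y + Qf E s + sum_list (map (\<lambda>(u,v). y $ u * s $ v + y $ v * s $ u) E)"
    unfolding Qf_def by (simp only: sum_list_pair_add)
  also have "\<dots> = Qf E y + Qf E s + y \<bullet> nbv n E s" using dot_nbv[OF E y] by simp
  finally show ?thesis .
qed

lemma nbv_add:
  assumes s: "s \<in> carrier_vec n" and t: "t \<in> carrier_vec n" and E: "ebound n E"
  shows "nbv n E (s + t) = nbv n E s + nbv n E t"
proof (rule eq_vecI)
  fix x assume "x < dim_vec (nbv n E s + nbv n E t)"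
  then have x: "x < n" by simp
  have "nbv n E (s + t) $ x = sum_list (map (\<lambda>e. (case e of (u,v) \<Rightarrow> (if u = x then s $ v else 0) + (if v = x then s $ u else 0))
      + (case e of (u,v) \<Rightarrow> (if u = x then t $ v else 0) + (if v = x then t $ u else 0))) E)"
    unfolding nbv_def using x
  proof (simp, intro arg_cong[where f = sum_list] map_cong refl)
    fix e assume e: "e \<in> set E"
    obtain u v where uv: "e = (u, v)" by force
    have u: "u < n" and v: "v < n" using E e uv unfolding ebound_def by auto
    show "(case e of (u, v) \<Rightarrow> (if u = x then (s + t) $ v else 0) + (if v = x then (s + t) $ u else 0)) =
         (case e of (u, v) \<Rightarrow> (if u = x then s $ v else 0) + (if v = x then s $ u else 0)) +
         (case e of (u, v) \<Rightarrow> (if u = x then t $ v else 0) + (if v = x then t $ u else 0))"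
      using uv u v s t by (simp add: algebra_simps)
  qed
  also have "\<dots> = (nbv n E s + nbv n E t) $ x"
    unfolding nbv_def using x by (simp add: sum_list_addf)
  finally show "nbv n E (s + t) $ x = (nbv n E s + nbv n E t) $ x" .
qed simp

lemma nbv_sym:
  assumes E: "ebound n E" and s: "s \<in> carrier_vec n" and t: "t \<in> carrier_vec n"
  shows "t \<bullet> nbv n E s = s \<bullet> nbv n E t"
  unfolding dot_nbv[OF E s] dot_nbv[OF E t]
  by (intro arg_cong[where f = sum_list] map_cong refl) (auto simp: algebra_simps)

lemma nbv_self:
  assumes E: "ebound n E" and s: "s \<in> carrier_vec n"
  shows "s \<bullet> nbv n E s = 0"
proof -
  have "s \<bullet> nbv n E s = sum_list (map (\<lambda>e. 0) E)"
    unfolding dot_nbv[OF E s]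
    by (intro arg_cong[where f = sum_list] map_cong refl) (auto simp: mult.commute)
  then show ?thesis by simp
qed

lemma Q_zero: "ebound n E \<Longrightarrow> Qf E (0\<^sub>v n) = 0"
  unfolding Qf_def ebound_def
  by (induction E) auto

lemma nbv_zero: "ebound n E \<Longrightarrow> nbv n E (0\<^sub>v n) = 0\<^sub>v n"
  unfolding nbv_def ebound_def
proof (intro eq_vecI)
  fix x assume "\<forall>e\<in>set E. fst e < n \<and> snd e < n" "x < dim_vec (0\<^sub>v n)"
  then show "vec n (\<lambda>t. \<Sum>(u, v)\<leftarrow>E. (if u = t then 0\<^sub>v n $ v else 0) + (if v = t then 0\<^sub>v n $ u else 0)) $ x = 0\<^sub>v n $ x"
    by (induction E) auto
qed simp

definition edge_list :: "nat \<Rightarrow> bit mat \<Rightarrow> (nat \<times> nat) list" where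
  "edge_list n G = [(u, v). u \<leftarrow> [0..<n], v \<leftarrow> [0..<n], (u, v) \<in> graph_edges n G]"

lemma ebound_edge_list: "ebound n (edge_list n G)"
  by (auto simp: ebound_def edge_list_def)

definition amp :: "nat \<Rightarrow> complex" where
  "amp n = complex_of_real (1 / sqrt (2 ^ n))"

lemma amp_sq: "cnj (amp n) * amp n = 1 / 2 ^ n"
proof -
  have a: "sqrt (2 ^ n) * sqrt (2 ^ n) = (2 ^ n :: real)" by simp
  have r: "(1 / sqrt (2 ^ n)) * (1 / sqrt (2 ^ n)) = (1 / 2 ^ n :: real)"
    by (simp only: a times_divide_times_eq mult_1)
  have "cnj (amp n) * amp n = complex_of_real ((1 / sqrt (2 ^ n)) * (1 / sqrt (2 ^ n)))"
    by (simp only: amp_def Complex.complex_cnj_complex_of_real of_real_mult)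
  also have "\<dots> = complex_of_real (1 / 2 ^ n)" by (simp only: r)
  also have "\<dots> = 1 / 2 ^ n" by simp
  finally show ?thesis .
qed

lemma diag_mult_vec:
  assumes w: "w \<in> carrier_vec N"
  shows "mat N N (\<lambda>(i, i'). if i = i' then f i else 0) *\<^sub>v w = vec N (\<lambda>i. f i * w $ i)"
proof (rule eq_vecI)
  fix i assume "i < dim_vec (vec N (\<lambda>i. f i * w $ i))"
  then have i: "i < N" by simp
  have "(mat N N (\<lambda>(i, i'). if i = i' then f i else 0) *\<^sub>v w) $ i = (\<Sum>i'<N. (if i = i' then f i else 0) * w $ i')"
    using i w by (simp add: scalar_prod_def atLeast0LessThan)
  also have "\<dots> = (\<Sum>i'<N. if i = i' then f i * w $ i' else 0)" by (rule sum.cong) auto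
  also have "\<dots> = f i * w $ i" using i by (simp add: sum.delta)
  finally show "(mat N N (\<lambda>(i, i'). if i = i' then f i else 0) *\<^sub>v w) $ i = vec N (\<lambda>i. f i * w $ i) $ i"
    using i by simp
qed simp

lemma cz_diag: "cz_gate m u v = mat (2 ^ m) (2 ^ m) (\<lambda>(i, i'). if i = i' then (if qbit i u = 1 \<and> qbit i v = 1 then -1 else 1) else 0)"
  unfolding cz_gate_def by (intro eq_matI) auto

lemma foldr_cz:
  assumes E: "ebound n E"
  shows "foldr (\<lambda>(u, v) s. cz_gate n u v *\<^sub>v s) E (plus_state n) = vec (2 ^ n) (\<lambda>i. chi (Qf E (bits_vec n i)) * amp n)"
  using E
proof (induction E)
  case Nil
  then show ?case by (intro eq_vecI) (auto simp: plus_state_def amp_def Qf_def)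
next
  case (Cons e E)
  obtain u v where e: "e = (u, v)" by force
  have u: "u < n" and v: "v < n" using Cons.prems e unfolding ebound_def by auto
  have EE: "ebound n E" using Cons.prems unfolding ebound_def by auto
  have "foldr (\<lambda>(u, v) s. cz_gate n u v *\<^sub>v s) (e # E) (plus_state n)
      = cz_gate n u v *\<^sub>v vec (2 ^ n) (\<lambda>i. chi (Qf E (bits_vec n i)) * amp n)"
    using Cons.IH[OF EE] e by simp
  also have "\<dots> = vec (2 ^ n) (\<lambda>i. (if qbit i u = 1 \<and> qbit i v = 1 then -1 else 1) * (chi (Qf E (bits_vec n i)) * amp n))"
    unfolding cz_diag by (subst diag_mult_vec) auto
  also have "\<dots> = vec (2 ^ n) (\<lambda>i. chi (Qf (e # E) (bits_vec n i)) * amp n)"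
  proof (rule eq_vecI)
    fix i assume "i < dim_vec (vec (2 ^ n) (\<lambda>i. chi (Qf (e # E) (bits_vec n i)) * amp n))"
    then have i: "i < 2 ^ n" by simp
    have "Qf (e # E) (bits_vec n i) = bits_vec n i $ u * bits_vec n i $ v + Qf E (bits_vec n i)"
      using e by (simp add: Qf_def)
    moreover have "chi (bits_vec n i $ u * bits_vec n i $ v) = (if qbit i u = 1 \<and> qbit i v = 1 then -1 else 1)"
      using u v qbit_cases[of i u] qbit_cases[of i v] by (auto simp: chi_def)
    ultimately show "vec (2 ^ n) (\<lambda>i. (if qbit i u = 1 \<and> qbit i v = 1 then -1 else 1) * (chi (Qf E (bits_vec n i)) * amp n)) $ i =
         vec (2 ^ n) (\<lambda>i. chi (Qf (e # E) (bits_vec n i)) * amp n) $ i"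
      using i by (simp add: chi_add)
  qed simp
  finally show ?case .
qed

lemma graph_state_eq: "graph_state n G = vec (2 ^ n) (\<lambda>i. chi (Qf (edge_list n G) (bits_vec n i)) * amp n)"
  unfolding graph_state_def edge_list_def[symmetric] by (rule foldr_cz[OF ebound_edge_list])

lemma Z_entry:
  assumes "r < 2" "t < 2"
  shows "(if c = 1 then pauli_Z else 1\<^sub>m 2) $$ (r, t) = (if r = t then chi (c * of_nat r) else 0)"
proof -
  have "r = 0 \<or> r = 1" "t = 0 \<or> t = 1" using assms by auto
  then show ?thesis by (cases c) (auto simp: pauli_Z_def mat_of_rows_list_def)
qed

lemma Z_pow_diag:
  assumes c: "c \<in> carrier_vec n"
  shows "Z_pow n c = mat (2 ^ n) (2 ^ n) (\<lambda>(i, i'). if i = i' then chi (c \<bullet> bits_vec n i) else 0)"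
proof (rule eq_matI)
  fix i i' assume "i < dim_row (mat (2 ^ n) (2 ^ n) (\<lambda>(i, i'). if i = i' then chi (c \<bullet> bits_vec n i) else 0))"
    "i' < dim_col (mat (2 ^ n) (2 ^ n) (\<lambda>(i, i'). if i = i' then chi (c \<bullet> bits_vec n i) else 0))"
  then have i: "i < 2 ^ n" and i': "i' < 2 ^ n" by auto
  have "Z_pow n c $$ (i, i') = (\<Prod>j<n. if qbit i j = qbit i' j then chi (c $ j * of_nat (qbit i j)) else 0)"
    unfolding Z_pow_def using i i' by (simp add: tensor_ops_index Z_entry)
  also have "\<dots> = (if i = i' then chi (c \<bullet> bits_vec n i) else 0)"
  proof (cases "i = i'")
    case True
    then show ?thesis by (simp add: scalar_bits[OF c] chi_sum)
  next
    case False
    then obtain j where "j < n" "qbit i j \<noteq> qbit i' j" using bits_inj[OF i i'] by blast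
    then show ?thesis using False by (auto intro!: prod_zero bexI[of _ j])
  qed
  finally show "Z_pow n c $$ (i, i') = mat (2 ^ n) (2 ^ n) (\<lambda>(i, i'). if i = i' then chi (c \<bullet> bits_vec n i) else 0) $$ (i, i')"
    using i i' by simp
qed (auto simp: Z_pow_def)

definition gz :: "nat \<Rightarrow> (nat \<times> nat) list \<Rightarrow> bit vec \<Rightarrow> complex vec" where
  "gz n E c = vec (2 ^ n) (\<lambda>i. chi (c \<bullet> bits_vec n i) * (chi (Qf E (bits_vec n i)) * amp n))"

lemma gz_carrier[simp]: "gz n E c \<in> carrier_vec (2 ^ n)"
  by (simp add: gz_def)

lemma dim_gz[simp]: "dim_vec (gz n E c) = 2 ^ n"
  by (simp add: gz_def)

lemma Z_graph: "c \<in> carrier_vec n \<Longrightarrow> Z_pow n c *\<^sub>v graph_state n G = gz n (edge_list n G) c"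
  unfolding Z_pow_diag graph_state_eq gz_def by (subst diag_mult_vec) auto

lemma graph_encoder_eq:
  assumes \<Gamma>: "\<Gamma> \<in> carrier_mat k n"
  shows "graph_encoder n k G \<Gamma> = mat (2 ^ n) (2 ^ k) (\<lambda>(i, x). gz n (edge_list n G) (transpose_mat \<Gamma> *\<^sub>v bits_vec k x) $ i)"
proof -
  have cx: "transpose_mat \<Gamma> *\<^sub>v bits_vec k x \<in> carrier_vec n" for x
    using \<Gamma> by (intro carrier_vecI) simp
  show ?thesis unfolding graph_encoder_def
    using cx by (intro eq_matI) (auto simp: Z_graph mat_of_cols_index)
qed

lemma gz_zero: "gz n E (0\<^sub>v n) = graph_state_vec" if "graph_state_vec = vec (2 ^ n) (\<lambda>i. chi (Qf E (bits_vec n i)) * amp n)"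
  using that by (intro eq_vecI) (auto simp: gz_def)

lemma ip_gz:
  assumes c: "c \<in> carrier_vec n" and d: "d \<in> carrier_vec n"
  shows "(\<Sum>i<2 ^ n. cnj (gz n E c $ i) * gz n E d $ i) = (if c = d then 1 else 0)"
proof -
  have "(\<Sum>i<2 ^ n. cnj (gz n E c $ i) * gz n E d $ i) = (\<Sum>i<2 ^ n. chi ((c + d) \<bullet> bits_vec n i) * (1 / 2 ^ n))"
  proof (rule sum.cong[OF refl])
    fix i :: nat assume "i \<in> {..<2 ^ n}"
    then have i: "i < 2 ^ n" by simp
    have "(c + d) \<bullet> bits_vec n i = c \<bullet> bits_vec n i + d \<bullet> bits_vec n i"
      using c d by (simp add: add_scalar_prod_distrib[of _ n])
    then have "chi ((c + d) \<bullet> bits_vec n i) = chi (c \<bullet> bits_vec n i) * chi (d \<bullet> bits_vec n i)"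
      by (simp add: chi_add)
    moreover have "cnj (gz n E c $ i) * gz n E d $ i
        = chi (c \<bullet> bits_vec n i) * chi (d \<bullet> bits_vec n i) * (chi (Qf E (bits_vec n i)) * chi (Qf E (bits_vec n i))) * (cnj (amp n) * amp n)"
      using i by (simp add: gz_def ac_simps)
    ultimately show "cnj (gz n E c $ i) * gz n E d $ i = chi ((c + d) \<bullet> bits_vec n i) * (1 / 2 ^ n)"
      by (simp add: amp_sq)
  qed
  also have "\<dots> = (\<Sum>i<2 ^ n. chi ((c + d) \<bullet> bits_vec n i)) * (1 / 2 ^ n)"
    by (simp only: sum_distrib_right)
  also have "\<dots> = (if c = d then 1 else 0)"
    using char_sum[of "c + d" n] c d bit_vec_add_eq_0_iff[OF c d] by simp
  finally show ?thesis .
qed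

lemma gz_complete:
  assumes i: "i < 2 ^ n" and i': "i' < 2 ^ n"
  shows "(\<Sum>c<2 ^ n. gz n E (bits_vec n c) $ i * cnj (gz n E (bits_vec n c) $ i')) = (if i = i' then 1 else 0)"
proof -
  let ?y = "bits_vec n i" and ?y' = "bits_vec n i'"
  have "(\<Sum>c<2 ^ n. gz n E (bits_vec n c) $ i * cnj (gz n E (bits_vec n c) $ i'))
      = (\<Sum>c<2 ^ n. chi (bits_vec n c \<bullet> (?y + ?y'))) * (chi (Qf E ?y) * chi (Qf E ?y') * (1 / 2 ^ n))"
    unfolding sum_distrib_right
  proof (rule sum.cong[OF refl])
    fix c :: nat assume "c \<in> {..<2 ^ n}"
    have "bits_vec n c \<bullet> (?y + ?y') = bits_vec n c \<bullet> ?y + bits_vec n c \<bullet> ?y'"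
      by (simp add: scalar_prod_add_distrib[of _ n])
    then have "chi (bits_vec n c \<bullet> (?y + ?y')) = chi (bits_vec n c \<bullet> ?y) * chi (bits_vec n c \<bullet> ?y')"
      by (simp add: chi_add)
    moreover have "gz n E (bits_vec n c) $ i * cnj (gz n E (bits_vec n c) $ i')
        = (chi (bits_vec n c \<bullet> ?y) * chi (bits_vec n c \<bullet> ?y')) * (chi (Qf E ?y) * chi (Qf E ?y')) * (cnj (amp n) * amp n)"
      using i i' by (simp add: gz_def ac_simps)
    ultimately show "gz n E (bits_vec n c) $ i * cnj (gz n E (bits_vec n c) $ i')
        = chi (bits_vec n c \<bullet> (?y + ?y')) * (chi (Qf E ?y) * chi (Qf E ?y') * (1 / 2 ^ n))"
      by (simp only: amp_sq mult.assoc)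
  qed
  also have "\<dots> = (if i = i' then 1 else 0)"
  proof -
    have yy: "?y + ?y' \<in> carrier_vec n" by simp
    have eq: "(?y + ?y' = 0\<^sub>v n) \<longleftrightarrow> i = i'"
      using bit_vec_add_eq_0_iff[of ?y n ?y'] bits_vec_inj[OF i i'] by auto
    show ?thesis using char_sum'[OF yy] eq by auto
  qed
  finally show ?thesis .
qed

definition av :: "bit vec \<Rightarrow> nat \<Rightarrow> nat" where
  "av x j = (if x $ j = 1 then 1 else 0)"

definition Pmat :: "nat \<Rightarrow> (nat \<times> nat) list \<Rightarrow> bit vec \<Rightarrow> complex mat" where
  "Pmat n E s = (\<i> ^ (2 * (if Qf E s = 1 then 1 else 0))) \<cdot>\<^sub>m
     tensor_ops n (\<lambda>j. pauli_X ^\<^sub>m av s j * pauli_Z ^\<^sub>m av (nbv n E s) j)"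

lemma Pmat_carrier[simp]: "Pmat n E s \<in> carrier_mat (2 ^ n) (2 ^ n)"
  by (simp add: Pmat_def)

lemma Pmat_dim[simp]: "dim_row (Pmat n E s) = 2 ^ n" "dim_col (Pmat n E s) = 2 ^ n"
  by (simp_all add: Pmat_def)

lemma Pmat_pauli: "Pmat n E s \<in> pauli_group n"
  unfolding Pmat_def pauli_group_def by blast

lemma X_pow_01: "pauli_X ^\<^sub>m (if \<alpha> = (1::bit) then 1 else 0) = (if \<alpha> = 1 then pauli_X else 1\<^sub>m 2)"
  by (cases \<alpha>) (auto simp: pauli_X_def mat_of_rows_list_def)

lemma Z_pow_01: "pauli_Z ^\<^sub>m (if \<alpha> = (1::bit) then 1 else 0) = (if \<alpha> = 1 then pauli_Z else 1\<^sub>m 2)"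
  by (cases \<alpha>) (auto simp: pauli_Z_def mat_of_rows_list_def)

lemma mult2_index:
  assumes "A \<in> carrier_mat 2 2" "B \<in> carrier_mat 2 2" "r < 2" "t < 2"
  shows "(A * B) $$ (r, t) = A $$ (r, 0) * B $$ (0, t) + A $$ (r, 1) * B $$ (1, t)"
  using mat_mult_index_sum[OF assms] by (simp add: numeral_2_eq_2 lessThan_Suc add.commute)

lemma XZ_entry:
  assumes r: "r < 2" and t: "t < 2"
  shows "(pauli_X ^\<^sub>m (if \<alpha> = (1::bit) then 1 else 0) * pauli_Z ^\<^sub>m (if \<beta> = (1::bit) then 1 else 0)) $$ (r, t)
     = (if (of_nat r :: bit) = of_nat t + \<alpha> then chi (\<beta> * of_nat t) else 0)"
proof -
  have rr: "r = 0 \<or> r = 1" and tt: "t = 0 \<or> t = 1" using r t by auto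
  have c1: "(if \<alpha> = 1 then pauli_X else 1\<^sub>m 2) \<in> carrier_mat 2 2" by simp
  have c2: "(if \<beta> = 1 then pauli_Z else 1\<^sub>m 2) \<in> carrier_mat 2 2" by simp
  show ?thesis
    unfolding X_pow_01 Z_pow_01 mult2_index[OF c1 c2 r t]
    using rr tt by (cases \<alpha>; cases \<beta>) (auto simp: pauli_X_def pauli_Z_def mat_of_rows_list_def chi_def)
qed

lemma prod_if_zero:
  fixes n :: nat
  shows "(\<Prod>j<n. if A j then f j else (0 :: 'a :: comm_semiring_1)) = (if \<forall>j<n. A j then \<Prod>j<n. f j else 0)"
proof (cases "\<forall>j<n. A j")
  case False
  then obtain j where j: "j < n" "\<not> A j" by blast
  have "(\<Prod>j<n. if A j then f j else (0 :: 'a)) = 0" by (rule prod_zero) (use j in auto)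
  then show ?thesis using False by (simp only: if_False)
qed simp

lemma i_pow_chi: "\<i> ^ (2 * (if b = (1::bit) then 1 else 0)) = chi b"
  by (cases b) (auto simp: chi_def)

lemma Pmat_index:
  assumes s: "s \<in> carrier_vec n" and i: "i < 2 ^ n" and i': "i' < 2 ^ n"
  shows "Pmat n E s $$ (i, i') = (if bits_vec n i = bits_vec n i' + s
      then chi (Qf E s) * chi (nbv n E s \<bullet> bits_vec n i') else 0)"
proof -
  have "tensor_ops n (\<lambda>j. pauli_X ^\<^sub>m av s j * pauli_Z ^\<^sub>m av (nbv n E s) j) $$ (i, i')
      = (\<Prod>j<n. if (of_nat (qbit i j) :: bit) = of_nat (qbit i' j) + s $ j
                then chi (nbv n E s $ j * of_nat (qbit i' j)) else 0)"
    using i i' by (simp add: tensor_ops_index av_def XZ_entry)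
  also have "\<dots> = (if \<forall>j<n. (of_nat (qbit i j) :: bit) = of_nat (qbit i' j) + s $ j
                then \<Prod>j<n. chi (nbv n E s $ j * of_nat (qbit i' j)) else 0)"
    by (rule prod_if_zero)
  also have "(\<forall>j<n. (of_nat (qbit i j) :: bit) = of_nat (qbit i' j) + s $ j) \<longleftrightarrow> bits_vec n i = bits_vec n i' + s"
  proof
    assume "\<forall>j<n. (of_nat (qbit i j) :: bit) = of_nat (qbit i' j) + s $ j"
    then show "bits_vec n i = bits_vec n i' + s" using s by (intro eq_vecI) auto
  next
    assume h: "bits_vec n i = bits_vec n i' + s"
    show "\<forall>j<n. (of_nat (qbit i j) :: bit) = of_nat (qbit i' j) + s $ j"
    proof (intro allI impI)
      fix j assume j: "j < n"
      have "bits_vec n i $ j = (bits_vec n i' + s) $ j" using h by simp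
      then show "(of_nat (qbit i j) :: bit) = of_nat (qbit i' j) + s $ j" using j s by simp
    qed
  qed
  also have "(\<Prod>j<n. chi (nbv n E s $ j * of_nat (qbit i' j))) = chi (nbv n E s \<bullet> bits_vec n i')"
    by (simp add: scalar_bits[OF nbv_carrier] chi_sum)
  finally show ?thesis unfolding Pmat_def using i i' by (simp add: i_pow_chi)
qed

lemma Pmat_mult_vec:
  assumes s: "s \<in> carrier_vec n" and w: "w \<in> carrier_vec (2 ^ n)" and i: "i < 2 ^ n"
  shows "(Pmat n E s *\<^sub>v w) $ i = chi (Qf E s) * chi (nbv n E s \<bullet> (bits_vec n i + s)) * w $ vidx (bits_vec n i + s)"
proof -
  let ?y = "bits_vec n i + s"
  have yc: "?y \<in> carrier_vec n" using s by simp
  have "(Pmat n E s *\<^sub>v w) $ i = (\<Sum>i'<2 ^ n. Pmat n E s $$ (i, i') * w $ i')"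
    using i w by (simp add: scalar_prod_def atLeast0LessThan)
  also have "\<dots> = (\<Sum>i'<2 ^ n. if bits_vec n i' = ?y then chi (Qf E s) * chi (nbv n E s \<bullet> bits_vec n i') * w $ i' else 0)"
  proof (rule sum.cong[OF refl])
    fix i' :: nat assume "i' \<in> {..<2 ^ n}"
    then have i': "i' < 2 ^ n" by simp
    have "(bits_vec n i = bits_vec n i' + s) \<longleftrightarrow> (bits_vec n i' = ?y)"
      using vec_bit_swap[of "bits_vec n i" n "bits_vec n i'" s] s by simp
    then show "Pmat n E s $$ (i, i') * w $ i' = (if bits_vec n i' = ?y then chi (Qf E s) * chi (nbv n E s \<bullet> bits_vec n i') * w $ i' else 0)"
      using Pmat_index[OF s i i'] by simp
  qed
  also have "\<dots> = chi (Qf E s) * chi (nbv n E s \<bullet> bits_vec n (vidx ?y)) * w $ vidx ?y"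
    by (rule sum_delta_bits[OF yc])
  finally show ?thesis using bits_vec_vidx[OF yc] by simp
qed

lemma bit_identity: "(b::bit) + (p + 0) + (q + r) + (a + b + p) = r + q + a"
  by (cases a; cases b; cases p; cases q; cases r) (simp_all add: add_bit_eq_xor)

lemma Pmat_gz:
  assumes E: "ebound n E" and s: "s \<in> carrier_vec n" and c: "c \<in> carrier_vec n"
  shows "Pmat n E s *\<^sub>v gz n E c = chi (s \<bullet> c) \<cdot>\<^sub>v gz n E c"
proof (rule eq_vecI)
  fix i assume "i < dim_vec (chi (s \<bullet> c) \<cdot>\<^sub>v gz n E c)"
  then have i: "i < 2 ^ n" by simp
  let ?y = "bits_vec n i"
  let ?nb = "nbv n E s"
  have yc: "?y \<in> carrier_vec n" by simp
  have ysc: "?y + s \<in> carrier_vec n" using s by simp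
  have vi: "vidx (?y + s) < 2 ^ n" using vidx_less[OF ysc] .
  have "(Pmat n E s *\<^sub>v gz n E c) $ i = chi (Qf E s) * chi (?nb \<bullet> (?y + s)) *
      (chi (c \<bullet> (?y + s)) * (chi (Qf E (?y + s)) * amp n))"
    using Pmat_mult_vec[OF s gz_carrier i] vi bits_vec_vidx[OF ysc] by (simp add: gz_def)
  also have "\<dots> = chi (Qf E s + (?nb \<bullet> (?y + s)) + (c \<bullet> (?y + s)) + Qf E (?y + s)) * amp n"
    by (simp add: chi_add ac_simps)
  also have "Qf E s + (?nb \<bullet> (?y + s)) + (c \<bullet> (?y + s)) + Qf E (?y + s)
      = Qf E s + (?y \<bullet> ?nb + s \<bullet> ?nb) + (c \<bullet> ?y + s \<bullet> c) + (Qf E ?y + Qf E s + ?y \<bullet> ?nb)"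
  proof -
    have "?nb \<bullet> (?y + s) = ?nb \<bullet> ?y + ?nb \<bullet> s" using s by (simp add: scalar_prod_add_distrib[of _ n])
    moreover have "?nb \<bullet> ?y = ?y \<bullet> ?nb" by (rule comm_scalar_prod[of _ n]) auto
    moreover have "?nb \<bullet> s = s \<bullet> ?nb" using s by (intro comm_scalar_prod[of _ n]) auto
    moreover have "c \<bullet> (?y + s) = c \<bullet> ?y + c \<bullet> s" using s c by (simp add: scalar_prod_add_distrib[of _ n])
    moreover have "c \<bullet> s = s \<bullet> c" using s c by (intro comm_scalar_prod[of _ n]) auto
    moreover have "Qf E (?y + s) = Qf E ?y + Qf E s + ?y \<bullet> ?nb" by (rule Q_add[OF E yc s])
    ultimately show ?thesis by simp
  qed
  also have "\<dots> = s \<bullet> c + c \<bullet> ?y + Qf E ?y"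
    using nbv_self[OF E s] bit_identity by simp
  also have "chi (s \<bullet> c + c \<bullet> ?y + Qf E ?y) * amp n = (chi (s \<bullet> c) \<cdot>\<^sub>v gz n E c) $ i"
    using i by (simp add: gz_def chi_add ac_simps)
  finally show "(Pmat n E s *\<^sub>v gz n E c) $ i = (chi (s \<bullet> c) \<cdot>\<^sub>v gz n E c) $ i" .
qed simp

lemma vec_cond_swap:
  assumes a: "a \<in> carrier_vec n" and b: "b \<in> carrier_vec n" and s: "s \<in> carrier_vec n" and t: "t \<in> carrier_vec n"
  shows "(a + s = b + t) \<longleftrightarrow> (a = b + (s + (t :: bit vec)))"
proof -
  have "(b + t = a + s) \<longleftrightarrow> (a = (b + t) + s)" using vec_bit_swap[of "b + t" n a s] a b s t by simp
  moreover have "(b + t) + s = b + (s + t)" using b s t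
    by (metis assoc_add_vec comm_add_vec)
  ultimately show ?thesis by auto
qed

lemma Pmat_mult:
  assumes E: "ebound n E" and s: "s \<in> carrier_vec n" and t: "t \<in> carrier_vec n"
  shows "Pmat n E s * Pmat n E t = Pmat n E (s + t)"
proof (rule eq_matI)
  fix i i'' assume "i < dim_row (Pmat n E (s + t))" "i'' < dim_col (Pmat n E (s + t))"
  then have i: "i < 2 ^ n" and i'': "i'' < 2 ^ n" by auto
  let ?y = "bits_vec n i" and ?z = "bits_vec n i''"
  have yc: "?y \<in> carrier_vec n" and zc: "?z \<in> carrier_vec n" by auto
  have ysc: "?y + s \<in> carrier_vec n" using s by simp
  have vi: "vidx (?y + s) < 2 ^ n" using vidx_less[OF ysc] .
  have colc: "col (Pmat n E t) i'' \<in> carrier_vec (2 ^ n)" by (rule carrier_vecI) simp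
  have "(Pmat n E s * Pmat n E t) $$ (i, i'') = (Pmat n E s *\<^sub>v col (Pmat n E t) i'') $ i"
    using i i'' by simp
  also have "\<dots> = chi (Qf E s) * chi (nbv n E s \<bullet> (?y + s)) * Pmat n E t $$ (vidx (?y + s), i'')"
    using Pmat_mult_vec[OF s colc i] vi i'' by simp
  also have "\<dots> = (if ?y + s = ?z + t then chi (Qf E s) * chi (nbv n E s \<bullet> (?y + s)) * (chi (Qf E t) * chi (nbv n E t \<bullet> ?z)) else 0)"
    using Pmat_index[OF t vi i''] bits_vec_vidx[OF ysc] by simp
  also have "\<dots> = Pmat n E (s + t) $$ (i, i'')"
  proof (cases "?y + s = ?z + t")
    case True
    have cond: "?y = ?z + (s + t)" using True vec_cond_swap[OF yc zc s t] by simp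
    have "Qf E s + nbv n E s \<bullet> (?y + s) + (Qf E t + nbv n E t \<bullet> ?z) = Qf E (s + t) + nbv n E (s + t) \<bullet> ?z"
    proof -
      have "nbv n E s \<bullet> (?y + s) = nbv n E s \<bullet> ?z + nbv n E s \<bullet> t"
        using True zc t by (simp add: scalar_prod_add_distrib[of _ n])
      moreover have "nbv n E s \<bullet> t = t \<bullet> nbv n E s" using t by (intro comm_scalar_prod[of _ n]) auto
      moreover have "t \<bullet> nbv n E s = s \<bullet> nbv n E t" by (rule nbv_sym[OF E s t])
      moreover have "Qf E (s + t) = Qf E s + Qf E t + s \<bullet> nbv n E t" by (rule Q_add[OF E s t])
      moreover have "nbv n E (s + t) \<bullet> ?z = nbv n E s \<bullet> ?z + nbv n E t \<bullet> ?z"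
        using nbv_add[OF s t E] zc by (simp add: add_scalar_prod_distrib[of _ n])
      ultimately show ?thesis by (simp add: ac_simps)
    qed
    then have "chi (Qf E s) * chi (nbv n E s \<bullet> (?y + s)) * (chi (Qf E t) * chi (nbv n E t \<bullet> ?z))
        = chi (Qf E (s + t)) * chi (nbv n E (s + t) \<bullet> ?z)"
      by (metis chi_add mult.assoc)
    then show ?thesis using True cond Pmat_index[of "s + t" n i i'' E] s t i i'' by simp
  next
    case False
    then have "?y \<noteq> ?z + (s + t)" using vec_cond_swap[OF yc zc s t] by simp
    then show ?thesis using False Pmat_index[of "s + t" n i i'' E] s t i i'' by simp
  qed
  finally show "(Pmat n E s * Pmat n E t) $$ (i, i'') = Pmat n E (s + t) $$ (i, i'')" .
qed auto

lemma Pmat_inj: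
  assumes s: "s \<in> carrier_vec n" and t: "t \<in> carrier_vec n" and eq: "Pmat n E s = Pmat n E t"
  shows "s = t"
proof (rule ccontr)
  assume ne: "s \<noteq> t"
  have vs: "vidx s < 2 ^ n" using vidx_less[OF s] .
  have z: "(0::nat) < 2 ^ n" by simp
  have bs: "bits_vec n (vidx s) = bits_vec n 0 + s"
    using bits_vec_vidx[OF s] bits_vec_0 s by simp
  have "Pmat n E s $$ (vidx s, 0) \<noteq> 0"
    using Pmat_index[OF s vs z] bs by simp
  moreover have "Pmat n E t $$ (vidx s, 0) = 0"
  proof -
    have "bits_vec n (vidx s) \<noteq> bits_vec n 0 + t"
      using bits_vec_vidx[OF s] bits_vec_0 t ne by simp
    then show ?thesis using Pmat_index[OF t vs z] by simp
  qed
  ultimately show False using eq by simp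
qed

lemma Pmat_zero:
  assumes E: "ebound n E"
  shows "Pmat n E (0\<^sub>v n) = 1\<^sub>m (2 ^ n)"
proof (rule eq_matI)
  fix i i' assume "i < dim_row (1\<^sub>m (2 ^ n) :: complex mat)" "i' < dim_col (1\<^sub>m (2 ^ n) :: complex mat)"
  then have i: "i < 2 ^ n" and i': "i' < 2 ^ n" by auto
  have "(bits_vec n i = bits_vec n i' + 0\<^sub>v n) \<longleftrightarrow> i = i'"
    using bits_vec_inj[OF i i'] by auto
  then show "Pmat n E (0\<^sub>v n) $$ (i, i') = (1\<^sub>m (2 ^ n) :: complex mat) $$ (i, i')"
    using Pmat_index[of "0\<^sub>v n" n i i' E] i i' Q_zero[OF E] nbv_zero[OF E] by simp
qed auto

lemma Pmat_sym:
  assumes E: "ebound n E" and s: "s \<in> carrier_vec n" and i: "i < 2 ^ n" and i': "i' < 2 ^ n"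
  shows "Pmat n E s $$ (i, i') = Pmat n E s $$ (i', i)"
proof -
  have sw: "(bits_vec n i = bits_vec n i' + s) \<longleftrightarrow> (bits_vec n i' = bits_vec n i + s)"
    using vec_bit_swap[of "bits_vec n i" n "bits_vec n i'" s] s by simp
  show ?thesis
  proof (cases "bits_vec n i = bits_vec n i' + s")
    case True
    have "nbv n E s \<bullet> bits_vec n i = nbv n E s \<bullet> bits_vec n i' + nbv n E s \<bullet> s"
      using True s by (simp add: scalar_prod_add_distrib[of _ n])
    moreover have "nbv n E s \<bullet> s = s \<bullet> nbv n E s" using s by (intro comm_scalar_prod[of _ n]) auto
    ultimately have "nbv n E s \<bullet> bits_vec n i = nbv n E s \<bullet> bits_vec n i'"
      using nbv_self[OF E s] by simp
    then show ?thesis using True sw Pmat_index[OF s i i'] Pmat_index[OF s i' i] by simp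
  next
    case False
    then show ?thesis using sw Pmat_index[OF s i i'] Pmat_index[OF s i' i] by simp
  qed
qed

lemma Pmat_real:
  assumes s: "s \<in> carrier_vec n" and i: "i < 2 ^ n" and i': "i' < 2 ^ n"
  shows "cnj (Pmat n E s $$ (i, i')) = Pmat n E s $$ (i, i')"
  using Pmat_index[OF s i i'] by simp

lemma ip_Pmat:
  assumes E: "ebound n E" and s: "s \<in> carrier_vec n" and c: "c \<in> carrier_vec n" and v: "v \<in> carrier_vec (2 ^ n)"
  shows "(\<Sum>i<2 ^ n. cnj (gz n E c $ i) * (Pmat n E s *\<^sub>v v) $ i) = chi (s \<bullet> c) * (\<Sum>i<2 ^ n. cnj (gz n E c $ i) * v $ i)"
proof -
  have "(\<Sum>i<2 ^ n. cnj (gz n E c $ i) * (Pmat n E s *\<^sub>v v) $ i)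
      = (\<Sum>i<2 ^ n. \<Sum>i'<2 ^ n. cnj (gz n E c $ i) * (Pmat n E s $$ (i, i') * v $ i'))"
    using v by (intro sum.cong refl) (simp add: scalar_prod_def atLeast0LessThan sum_distrib_left)
  also have "\<dots> = (\<Sum>i'<2 ^ n. \<Sum>i<2 ^ n. cnj (gz n E c $ i) * (Pmat n E s $$ (i, i') * v $ i'))"
    by (rule sum.swap)
  also have "\<dots> = (\<Sum>i'<2 ^ n. cnj ((Pmat n E s *\<^sub>v gz n E c) $ i') * v $ i')"
  proof (rule sum.cong[OF refl])
    fix i' :: nat assume "i' \<in> {..<2 ^ n}"
    then have i': "i' < 2 ^ n" by simp
    have "cnj ((Pmat n E s *\<^sub>v gz n E c) $ i') = (\<Sum>i<2 ^ n. cnj (Pmat n E s $$ (i', i)) * cnj (gz n E c $ i))"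
      using i' by (simp add: scalar_prod_def atLeast0LessThan)
    also have "\<dots> = (\<Sum>i<2 ^ n. Pmat n E s $$ (i, i') * cnj (gz n E c $ i))"
      using Pmat_real[OF s i'] Pmat_sym[OF E s _ i'] by (intro sum.cong refl) auto
    finally show "(\<Sum>i<2 ^ n. cnj (gz n E c $ i) * (Pmat n E s $$ (i, i') * v $ i')) = cnj ((Pmat n E s *\<^sub>v gz n E c) $ i') * v $ i'"
      by (simp add: sum_distrib_left sum_distrib_right ac_simps)
  qed
  also have "\<dots> = (\<Sum>i'<2 ^ n. chi (s \<bullet> c) * (cnj (gz n E c $ i') * v $ i'))"
    using Pmat_gz[OF E s c] by (intro sum.cong refl) simp
  also have "\<dots> = chi (s \<bullet> c) * (\<Sum>i<2 ^ n. cnj (gz n E c $ i) * v $ i)"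
    by (simp add: sum_distrib_left)
  finally show ?thesis .
qed

lemma adjoint_mult:
  fixes A B :: "complex mat"
  assumes A: "A \<in> carrier_mat r m" and B: "B \<in> carrier_mat m c"
  shows "mat_adjoint (A * B) = mat_adjoint B * mat_adjoint A"
proof (rule eq_matI)
  fix i j assume "i < dim_row (mat_adjoint B * mat_adjoint A)" "j < dim_col (mat_adjoint B * mat_adjoint A)"
  then have i: "i < c" and j: "j < r" using A B by auto
  have "mat_adjoint (A * B) $$ (i, j) = cnj ((A * B) $$ (j, i))"
    using A B i j by (simp add: mat_adjoint_index)
  also have "\<dots> = (\<Sum>l<m. cnj (A $$ (j, l)) * cnj (B $$ (l, i)))"
    using mat_mult_index_sum[OF A B j i] by simp
  also have "\<dots> = (\<Sum>l<m. mat_adjoint B $$ (i, l) * mat_adjoint A $$ (l, j))"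
    using A B i j by (intro sum.cong refl) (simp add: mat_adjoint_index mult.commute)
  also have "\<dots> = (mat_adjoint B * mat_adjoint A) $$ (i, j)"
    using mat_mult_index_sum[of "mat_adjoint B" c m "mat_adjoint A" r i j] A B i j by simp
  finally show "mat_adjoint (A * B) $$ (i, j) = (mat_adjoint B * mat_adjoint A) $$ (i, j)" .
qed (use A B in auto)

lemma zero_from_ip:
  assumes r: "r \<in> carrier_vec (2 ^ n)"
    and ip: "\<And>c. c < 2 ^ n \<Longrightarrow> (\<Sum>i<2 ^ n. cnj (gz n E (bits_vec n c) $ i) * r $ i) = 0"
  shows "r = 0\<^sub>v (2 ^ n)"
proof (rule eq_vecI)
  fix i assume "i < dim_vec (0\<^sub>v (2 ^ n) :: complex vec)"
  then have i: "i < 2 ^ n" by simp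
  have "(\<Sum>i'<2 ^ n. (if i = i' then 1 else 0) * r $ i') = (\<Sum>i'<2 ^ n. if i = i' then r $ i' else 0)"
    by (rule sum.cong) auto
  then have "r $ i = (\<Sum>i'<2 ^ n. (if i = i' then 1 else 0) * r $ i')"
    using i by (simp add: sum.delta)
  also have "\<dots> = (\<Sum>i'<2 ^ n. (\<Sum>c<2 ^ n. gz n E (bits_vec n c) $ i * cnj (gz n E (bits_vec n c) $ i')) * r $ i')"
    using i gz_complete by (intro sum.cong refl) simp
  also have "\<dots> = (\<Sum>i'<2 ^ n. \<Sum>c<2 ^ n. gz n E (bits_vec n c) $ i * (cnj (gz n E (bits_vec n c) $ i') * r $ i'))"
    by (simp add: sum_distrib_right sum_distrib_left ac_simps)
  also have "\<dots> = (\<Sum>c<2 ^ n. \<Sum>i'<2 ^ n. gz n E (bits_vec n c) $ i * (cnj (gz n E (bits_vec n c) $ i') * r $ i'))"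
    by (rule sum.swap)
  also have "\<dots> = (\<Sum>c<2 ^ n. gz n E (bits_vec n c) $ i * (\<Sum>i'<2 ^ n. cnj (gz n E (bits_vec n c) $ i') * r $ i'))"
    by (simp add: sum_distrib_left)
  also have "\<dots> = 0" using ip by simp
  finally show "r $ i = 0\<^sub>v (2 ^ n) $ i" using i by simp
qed (use r in simp)

definition cx :: "nat \<Rightarrow> bit mat \<Rightarrow> nat \<Rightarrow> bit vec" where
  "cx k \<Gamma> x = transpose_mat \<Gamma> *\<^sub>v bits_vec k x"

lemma cx_carrier: "\<Gamma> \<in> carrier_mat k n \<Longrightarrow> cx k \<Gamma> x \<in> carrier_vec n"
  unfolding cx_def by (rule carrier_vecI) simp

lemma EG_eq:
  assumes \<Gamma>: "\<Gamma> \<in> carrier_mat k n"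
  shows "graph_encoder n k G \<Gamma> = mat (2 ^ n) (2 ^ k) (\<lambda>(i, x). gz n (edge_list n G) (cx k \<Gamma> x) $ i)"
  unfolding cx_def by (rule graph_encoder_eq[OF \<Gamma>])

lemma EG_carrier:
  assumes \<Gamma>: "\<Gamma> \<in> carrier_mat k n"
  shows "graph_encoder n k G \<Gamma> \<in> carrier_mat (2 ^ n) (2 ^ k)"
  unfolding EG_eq[OF \<Gamma>] by simp

lemma EG_col:
  assumes \<Gamma>: "\<Gamma> \<in> carrier_mat k n" and x: "x < 2 ^ k"
  shows "col (graph_encoder n k G \<Gamma>) x = gz n (edge_list n G) (cx k \<Gamma> x)"
  unfolding EG_eq[OF \<Gamma>] using x by (intro eq_vecI) auto

lemma EG_adj:
  assumes \<Gamma>: "\<Gamma> \<in> carrier_mat k n"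
  shows "mat_adjoint (graph_encoder n k G \<Gamma>) * graph_encoder n k G \<Gamma>
      = mat (2 ^ k) (2 ^ k) (\<lambda>(x, y). if cx k \<Gamma> x = cx k \<Gamma> y then 1 else 0)"
proof (rule eq_matI)
  let ?EG = "graph_encoder n k G \<Gamma>"
  have EGc: "?EG \<in> carrier_mat (2 ^ n) (2 ^ k)" by (rule EG_carrier[OF \<Gamma>])
  fix x y assume "x < dim_row (mat (2 ^ k) (2 ^ k) (\<lambda>(x, y). if cx k \<Gamma> x = cx k \<Gamma> y then 1 else (0::complex)))"
    "y < dim_col (mat (2 ^ k) (2 ^ k) (\<lambda>(x, y). if cx k \<Gamma> x = cx k \<Gamma> y then 1 else (0::complex)))"
  then have x: "x < 2 ^ k" and y: "y < 2 ^ k" by auto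
  have "(mat_adjoint ?EG * ?EG) $$ (x, y) = (\<Sum>i<2 ^ n. mat_adjoint ?EG $$ (x, i) * ?EG $$ (i, y))"
    by (rule mat_mult_index_sum[OF mat_adjoint_carrier[OF EGc] EGc x y])
  also have "\<dots> = (\<Sum>i<2 ^ n. cnj (gz n (edge_list n G) (cx k \<Gamma> x) $ i) * gz n (edge_list n G) (cx k \<Gamma> y) $ i)"
    using x y EGc by (intro sum.cong refl) (simp add: mat_adjoint_index EG_eq[OF \<Gamma>])
  also have "\<dots> = (if cx k \<Gamma> x = cx k \<Gamma> y then 1 else 0)"
    by (rule ip_gz[OF cx_carrier[OF \<Gamma>] cx_carrier[OF \<Gamma>]])
  finally show "(mat_adjoint ?EG * ?EG) $$ (x, y) = mat (2 ^ k) (2 ^ k) (\<lambda>(x, y). if cx k \<Gamma> x = cx k \<Gamma> y then 1 else (0::complex)) $$ (x, y)"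
    using x y by simp
qed (use EG_carrier[OF \<Gamma>] in auto)

lemma cx_inj:
  assumes \<Gamma>: "\<Gamma> \<in> carrier_mat k n" and rk: "vec_space.rank k \<Gamma> = k"
    and x: "x < 2 ^ k" and y: "y < 2 ^ k" and eq: "cx k \<Gamma> x = cx k \<Gamma> y"
  shows "x = y"
proof -
  have inj: "\<forall>z \<in> carrier_vec k. transpose_mat \<Gamma> *\<^sub>v z = 0\<^sub>v n \<longrightarrow> z = 0\<^sub>v k"
    using gamma_rank_inj[OF \<Gamma>] rk by simp
  have TC: "transpose_mat \<Gamma> \<in> carrier_mat n k" using \<Gamma> by simp
  have "transpose_mat \<Gamma> *\<^sub>v (bits_vec k x + bits_vec k y) = cx k \<Gamma> x + cx k \<Gamma> y"
    unfolding cx_def by (rule mult_add_distrib_mat_vec[OF TC]) auto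
  also have "\<dots> = 0\<^sub>v n" using eq bit_vec_add_eq_0_iff[OF cx_carrier[OF \<Gamma>] cx_carrier[OF \<Gamma>]] by simp
  finally have "bits_vec k x + bits_vec k y = 0\<^sub>v k" using inj by simp
  then have "bits_vec k x = bits_vec k y" using bit_vec_add_eq_0_iff[of "bits_vec k x" k "bits_vec k y"] by simp
  then show ?thesis using bits_vec_inj[OF x y] by simp
qed

lemma EG_iso:
  assumes \<Gamma>: "\<Gamma> \<in> carrier_mat k n" and rk: "vec_space.rank k \<Gamma> = k"
  shows "mat_adjoint (graph_encoder n k G \<Gamma>) * graph_encoder n k G \<Gamma> = 1\<^sub>m (2 ^ k)"
  unfolding EG_adj[OF \<Gamma>] using cx_inj[OF \<Gamma> rk] by (intro eq_matI) auto

definition gens :: "nat \<Rightarrow> nat \<Rightarrow> bit mat \<Rightarrow> (nat \<Rightarrow> nat) \<Rightarrow> bit mat \<Rightarrow> bit mat \<Rightarrow> complex mat list" where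
  "gens n k \<Gamma> j Binv G = map (\<lambda>m. Pmat n (edge_list n G) (sker n k \<Gamma> j Binv m)) (mlist n k j)"

lemma cplx_neg_self: "(x::complex) = - x \<Longrightarrow> x = 0"
proof -
  assume h: "x = - x"
  then have "2 * x = 0" by (metis add.right_inverse mult_2)
  then show "x = 0" by simp
qed

lemma vec_diff_zero:
  assumes "u - v = 0\<^sub>v N" "u \<in> carrier_vec N" "v \<in> carrier_vec N"
  shows "u = (v :: complex vec)"
proof (rule eq_vecI)
  fix i assume "i < dim_vec v"
  then have i: "i < N" using assms by simp
  have "(u - v) $ i = u $ i - v $ i" using i assms(3) by (simp add: carrier_vecD)
  moreover have "(u - v) $ i = 0" using assms(1) i by simp
  ultimately show "u $ i = v $ i" by simp
qed (use assms in simp)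

lemma mat_vec_zero: "A \<in> carrier_mat r c \<Longrightarrow> A *\<^sub>v 0\<^sub>v c = (0\<^sub>v r :: 'a :: comm_ring_1 vec)"
  by (intro eq_vecI) (auto simp: scalar_prod_def)

context
  fixes k n :: nat and \<Gamma> :: "bit mat" and j :: "nat \<Rightarrow> nat" and Binv :: "bit mat" and G :: "bit mat"
  assumes \<Gamma>c: "\<Gamma> \<in> carrier_mat k n" and jn: "\<forall>a<k. j a < n" and jinj: "inj_on j {..<k}"
    and Bic: "Binv \<in> carrier_mat k k" and BiB: "Binv * Bmat \<Gamma> j k = 1\<^sub>m k"
    and BBi: "Bmat \<Gamma> j k * Binv = 1\<^sub>m k"
    and rk: "vec_space.rank k \<Gamma> = k"
begin

lemmas kctx = \<Gamma>c jn jinj Bic BiB BBi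

abbreviation "EE \<equiv> edge_list n G"
abbreviation "sk \<equiv> sker n k \<Gamma> j Binv"
abbreviation "ML \<equiv> mlist n k j"
abbreviation "PP \<equiv> \<lambda>m. Pmat n EE (sk m)"

lemma EEb: "ebound n EE" by (rule ebound_edge_list)

lemma mlist_props: "m \<in> set ML \<Longrightarrow> m < n \<and> m \<notin> j ` {..<k}"
  using set_mlist[OF kctx] by auto

lemma char_group:
  assumes A: "A \<subseteq> set ML"
  shows "M \<in> gen_group n (PP ` A) \<Longrightarrow> \<exists>t \<in> carrier_vec n. M = Pmat n EE t \<and> \<Gamma> *\<^sub>v t = 0\<^sub>v k \<and> (\<forall>m0 \<in> set ML - A. t $ m0 = 0)"
proof (induction rule: gen_group.induct)
  case gen_one
  have "\<forall>m0 \<in> set ML - A. 0\<^sub>v n $ m0 = (0::bit)" using mlist_props by auto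
  then show ?case using Pmat_zero[OF EEb] mat_vec_zero[OF \<Gamma>c]
    by (intro bexI[of _ "0\<^sub>v n"]) auto
next
  case (gen_mult g h)
  obtain m where m: "m \<in> A" "g = PP m" using gen_mult(1) by blast
  obtain t where t: "t \<in> carrier_vec n" "h = Pmat n EE t" "\<Gamma> *\<^sub>v t = 0\<^sub>v k" "\<forall>m0 \<in> set ML - A. t $ m0 = 0"
    using gen_mult(3) by blast
  have mM: "m < n" using m A mlist_props by auto
  have skc: "sk m \<in> carrier_vec n" using sker_carrier[OF kctx] .
  have "g * h = Pmat n EE (sk m + t)" using m t Pmat_mult[OF EEb skc t(1)] by simp
  moreover have "\<Gamma> *\<^sub>v (sk m + t) = 0\<^sub>v k"
    using mult_add_distrib_mat_vec[OF \<Gamma>c skc t(1)] sker_kernel[OF kctx mM] t(3) by simp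
  moreover have "\<forall>m0 \<in> set ML - A. (sk m + t) $ m0 = 0"
  proof
    fix m0 assume m0: "m0 \<in> set ML - A"
    then have "m0 < n" "m0 \<notin> j ` {..<k}" "m0 \<noteq> m" using mlist_props m(1) by auto
    then show "(sk m + t) $ m0 = 0" using sker_unit[OF kctx] t(4) m0 skc t(1) by auto
  qed
  ultimately show ?case using skc t(1) by (intro bexI[of _ "sk m + t"]) auto
qed

lemma gens_set: "set (gens n k \<Gamma> j Binv G) = PP ` set ML"
  by (simp add: gens_def)

lemma PP_inj: "inj_on PP (set ML)"
proof (rule inj_onI)
  fix m m' assume m: "m \<in> set ML" and m': "m' \<in> set ML" and eq: "PP m = PP m'"
  have "sk m = sk m'" using Pmat_inj[OF sker_carrier[OF kctx] sker_carrier[OF kctx] eq] .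
  then have "sk m $ m = sk m' $ m" by simp
  then show "m = m'" using sker_unit[OF kctx] mlist_props[OF m] by (auto split: if_splits)
qed

lemma S0_stab: "stabilizer_group n k (gen_group n (set (gens n k \<Gamma> j Binv G)))"
proof -
  let ?gs = "gens n k \<Gamma> j Binv G"
  have len: "length ?gs = n - k" using length_mlist[OF kctx] by (simp add: gens_def)
  have pauli: "set ?gs \<subseteq> pauli_group n" using Pmat_pauli by (auto simp: gens_def)
  have ind: "\<forall>i < length ?gs. ?gs ! i \<notin> gen_group n (set ?gs - {?gs ! i})"
  proof (intro allI impI notI)
    fix i assume i: "i < length ?gs" and mem: "?gs ! i \<in> gen_group n (set ?gs - {?gs ! i})"
    have iM: "i < length ML" using i by (simp add: gens_def)
    let ?m = "ML ! i"
    have mML: "?m \<in> set ML" using iM by simp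
    have gi: "?gs ! i = PP ?m" using iM by (simp add: gens_def)
    have "set ?gs - {?gs ! i} = PP ` (set ML - {?m})"
      unfolding gens_set gi using inj_on_image_set_diff[OF PP_inj, of "{?m}"] mML by auto
    then have "PP ?m \<in> gen_group n (PP ` (set ML - {?m}))" using mem gi by simp
    then obtain t where t: "t \<in> carrier_vec n" "PP ?m = Pmat n EE t" "\<forall>m0 \<in> set ML - (set ML - {?m}). t $ m0 = 0"
      using char_group[of "set ML - {?m}"] by blast
    have "sk ?m = t" using Pmat_inj[OF sker_carrier[OF kctx] t(1) t(2)] .
    moreover have "sk ?m $ ?m = 1" using sker_unit[OF kctx] mlist_props[OF mML] by simp
    moreover have "t $ ?m = 0" using t(3) mML by simp
    ultimately show False by simp
  qed
  have chr: "\<And>M. M \<in> gen_group n (set ?gs) \<Longrightarrow> \<exists>t \<in> carrier_vec n. M = Pmat n EE t"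
    using char_group[of "set ML"] unfolding gens_set by blast
  have comm: "\<forall>g\<in>gen_group n (set ?gs). \<forall>h\<in>gen_group n (set ?gs). g * h = h * g"
  proof (intro ballI)
    fix g h assume "g \<in> gen_group n (set ?gs)" "h \<in> gen_group n (set ?gs)"
    then obtain a b where a: "a \<in> carrier_vec n" "g = Pmat n EE a" and b: "b \<in> carrier_vec n" "h = Pmat n EE b"
      using chr by blast
    have "g * h = Pmat n EE (a + b)" using Pmat_mult[OF EEb a(1) b(1)] a b by simp
    also have "a + b = b + a" using a b by (simp add: comm_add_vec)
    also have "Pmat n EE (b + a) = h * g" using Pmat_mult[OF EEb b(1) a(1)] a b by simp
    finally show "g * h = h * g" .
  qed
  have neg: "- 1\<^sub>m (2 ^ n) \<notin> gen_group n (set ?gs)"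
  proof
    assume "- 1\<^sub>m (2 ^ n) \<in> gen_group n (set ?gs)"
    then obtain t where t: "t \<in> carrier_vec n" "- 1\<^sub>m (2 ^ n) = Pmat n EE t" using chr by blast
    have z: "0\<^sub>v n \<in> carrier_vec n" by simp
    have "Pmat n EE t *\<^sub>v gz n EE (0\<^sub>v n) = gz n EE (0\<^sub>v n)"
      using Pmat_gz[OF EEb t(1) z] t(1) by simp
    then have "(- 1\<^sub>m (2 ^ n)) *\<^sub>v gz n EE (0\<^sub>v n) = gz n EE (0\<^sub>v n)" using t(2) by simp
    then have "(- 1\<^sub>m (2 ^ n) *\<^sub>v gz n EE (0\<^sub>v n)) $ 0 = gz n EE (0\<^sub>v n) $ 0" by simp
    moreover have "(- 1\<^sub>m (2 ^ n) *\<^sub>v gz n EE (0\<^sub>v n)) $ 0 = - (gz n EE (0\<^sub>v n) $ 0)"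
      by (simp add: scalar_prod_def sum.delta atLeast0LessThan)
    moreover have "gz n EE (0\<^sub>v n) $ 0 \<noteq> 0" by (simp add: gz_def amp_def)
    ultimately show False by simp
  qed
  show ?thesis unfolding stabilizer_group_def using len pauli ind comm neg by blast
qed

lemma P_EG:
  assumes t: "t \<in> carrier_vec n" and kt: "\<Gamma> *\<^sub>v t = 0\<^sub>v k"
  shows "Pmat n EE t * graph_encoder n k G \<Gamma> = graph_encoder n k G \<Gamma>"
proof (rule eq_matI)
  have EGc: "graph_encoder n k G \<Gamma> \<in> carrier_mat (2 ^ n) (2 ^ k)" by (rule EG_carrier[OF \<Gamma>c])
  fix i x assume "i < dim_row (graph_encoder n k G \<Gamma>)" "x < dim_col (graph_encoder n k G \<Gamma>)"
  then have i: "i < 2 ^ n" and x: "x < 2 ^ k" using EGc by auto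
  have "(Pmat n EE t * graph_encoder n k G \<Gamma>) $$ (i, x) = (Pmat n EE t *\<^sub>v col (graph_encoder n k G \<Gamma>) x) $ i"
    using i x EGc by simp
  also have "\<dots> = (chi (t \<bullet> cx k \<Gamma> x) \<cdot>\<^sub>v gz n EE (cx k \<Gamma> x)) $ i"
    using EG_col[OF \<Gamma>c x] Pmat_gz[OF EEb t cx_carrier[OF \<Gamma>c]] by simp
  also have "t \<bullet> cx k \<Gamma> x = 0"
  proof -
    have "t \<bullet> cx k \<Gamma> x = cx k \<Gamma> x \<bullet> t" using t cx_carrier[OF \<Gamma>c] by (intro comm_scalar_prod[of _ n]) auto
    also have "\<dots> = bits_vec k x \<bullet> (\<Gamma> *\<^sub>v t)"
      unfolding cx_def by (rule transpose_vec_mult_scalar[OF \<Gamma>c t]) simp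
    also have "\<dots> = 0" using kt by (simp add: scalar_prod_def)
    finally show ?thesis .
  qed
  finally show "(Pmat n EE t * graph_encoder n k G \<Gamma>) $$ (i, x) = graph_encoder n k G \<Gamma> $$ (i, x)"
    using i x EG_col[OF \<Gamma>c x] EGc by (simp add: EG_eq[OF \<Gamma>c])
qed (use EG_carrier[OF \<Gamma>c, where G=G] in \<open>auto dest: carrier_matD\<close>)


lemma ip_minus:
  assumes "u \<in> carrier_vec N" "v \<in> carrier_vec N"
  shows "(\<Sum>i<N. cnj (a $ i) * (u - v) $ i) = (\<Sum>i<N. cnj (a $ i) * u $ i) - (\<Sum>i<N. cnj (a $ i) * (v :: complex vec) $ i)"
  using assms by (simp add: sum_subtractf[symmetric] right_diff_distrib)

lemma ip_EG:
  assumes c: "c \<in> carrier_vec n" and w: "w \<in> carrier_vec (2 ^ k)"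
  shows "(\<Sum>i<2 ^ n. cnj (gz n EE c $ i) * (graph_encoder n k G \<Gamma> *\<^sub>v w) $ i)
      = (\<Sum>x<2 ^ k. if c = cx k \<Gamma> x then w $ x else 0)"
proof -
  have "(\<Sum>i<2 ^ n. cnj (gz n EE c $ i) * (graph_encoder n k G \<Gamma> *\<^sub>v w) $ i)
      = (\<Sum>i<2 ^ n. \<Sum>x<2 ^ k. cnj (gz n EE c $ i) * (gz n EE (cx k \<Gamma> x) $ i * w $ x))"
    using w by (intro sum.cong refl) (simp add: EG_eq[OF \<Gamma>c] scalar_prod_def atLeast0LessThan sum_distrib_left)
  also have "\<dots> = (\<Sum>x<2 ^ k. \<Sum>i<2 ^ n. cnj (gz n EE c $ i) * (gz n EE (cx k \<Gamma> x) $ i * w $ x))"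
    by (rule sum.swap)
  also have "\<dots> = (\<Sum>x<2 ^ k. (\<Sum>i<2 ^ n. cnj (gz n EE c $ i) * gz n EE (cx k \<Gamma> x) $ i) * w $ x)"
    by (simp add: sum_distrib_right sum_distrib_left ac_simps)
  also have "\<dots> = (\<Sum>x<2 ^ k. if c = cx k \<Gamma> x then w $ x else 0)"
    using ip_gz[OF c cx_carrier[OF \<Gamma>c]] by (intro sum.cong refl) simp
  finally show ?thesis .
qed

lemma code_S0:
  "{graph_encoder n k G \<Gamma> *\<^sub>v w | w. w \<in> carrier_vec (2 ^ k)} = codespace n (gen_group n (set (gens n k \<Gamma> j Binv G)))"
proof
  let ?S = "gen_group n (set (gens n k \<Gamma> j Binv G))"
  let ?EG = "graph_encoder n k G \<Gamma>"
  have EGc: "?EG \<in> carrier_mat (2 ^ n) (2 ^ k)" by (rule EG_carrier[OF \<Gamma>c])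
  show "{?EG *\<^sub>v w | w. w \<in> carrier_vec (2 ^ k)} \<subseteq> codespace n ?S"
  proof
    fix u assume "u \<in> {?EG *\<^sub>v w | w. w \<in> carrier_vec (2 ^ k)}"
    then obtain w where w: "w \<in> carrier_vec (2 ^ k)" "u = ?EG *\<^sub>v w" by blast
    show "u \<in> codespace n ?S" unfolding codespace_def
    proof (intro CollectI conjI ballI)
      show "u \<in> carrier_vec (2 ^ n)" using w EGc by simp
      fix s assume "s \<in> ?S"
      then obtain t where t: "t \<in> carrier_vec n" "s = Pmat n EE t" "\<Gamma> *\<^sub>v t = 0\<^sub>v k"
        using char_group[of "set ML"] unfolding gens_set by blast
      have "s *\<^sub>v u = (Pmat n EE t * ?EG) *\<^sub>v w"
        using t(2) w(2) by (simp add: assoc_mult_mat_vec[OF Pmat_carrier EGc w(1)])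
      also have "\<dots> = u" using P_EG[OF t(1) t(3)] w(2) by simp
      finally show "s *\<^sub>v u = u" .
    qed
  qed
  show "codespace n ?S \<subseteq> {?EG *\<^sub>v w | w. w \<in> carrier_vec (2 ^ k)}"
  proof
    fix u assume u: "u \<in> codespace n ?S"
    then have uc: "u \<in> carrier_vec (2 ^ n)" and ufix: "\<And>s. s \<in> ?S \<Longrightarrow> s *\<^sub>v u = u"
      unfolding codespace_def by auto
    define w where "w = vec (2 ^ k) (\<lambda>x. \<Sum>i<2 ^ n. cnj (gz n EE (cx k \<Gamma> x) $ i) * u $ i)"
    have wc: "w \<in> carrier_vec (2 ^ k)" unfolding w_def by simp
    have EGw: "?EG *\<^sub>v w \<in> carrier_vec (2 ^ n)" using EGc wc by simp
    have "u - ?EG *\<^sub>v w = 0\<^sub>v (2 ^ n)"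
    proof (rule zero_from_ip)
      show "u - ?EG *\<^sub>v w \<in> carrier_vec (2 ^ n)" using uc EGw by simp
      fix c :: nat assume c: "c < 2 ^ n"
      let ?c = "bits_vec n c"
      have cc: "?c \<in> carrier_vec n" by simp
      have split: "(\<Sum>i<2 ^ n. cnj (gz n EE ?c $ i) * (u - ?EG *\<^sub>v w) $ i)
          = (\<Sum>i<2 ^ n. cnj (gz n EE ?c $ i) * u $ i) - (\<Sum>x<2 ^ k. if ?c = cx k \<Gamma> x then w $ x else 0)"
        using ip_minus[OF uc EGw] ip_EG[OF cc wc] by simp
      show "(\<Sum>i<2 ^ n. cnj (gz n EE ?c $ i) * (u - ?EG *\<^sub>v w) $ i) = 0"
      proof (cases "\<exists>x0<2 ^ k. ?c = cx k \<Gamma> x0")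
        case True
        then obtain x0 where x0: "x0 < 2 ^ k" "?c = cx k \<Gamma> x0" by blast
        have "(\<Sum>x<2 ^ k. if ?c = cx k \<Gamma> x then w $ x else 0) = (\<Sum>x<2 ^ k. if x = x0 then w $ x else 0)"
          using x0 cx_inj[OF \<Gamma>c rk x0(1)] by (intro sum.cong refl) auto
        also have "\<dots> = w $ x0" using x0 by (simp add: sum.delta')
        also have "\<dots> = (\<Sum>i<2 ^ n. cnj (gz n EE ?c $ i) * u $ i)" using x0 by (simp add: w_def)
        finally show ?thesis using split by simp
      next
        case False
        then have z1: "(\<Sum>x<2 ^ k. if ?c = cx k \<Gamma> x then w $ x else 0) = 0" by (intro sum.neutral) auto
        have "\<exists>m \<in> set ML. sk m \<bullet> ?c \<noteq> 0"
        proof (rule ccontr)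
          assume "\<not> (\<exists>m \<in> set ML. sk m \<bullet> ?c \<noteq> 0)"
          then obtain x where x: "x \<in> carrier_vec k" "?c = transpose_mat \<Gamma> *\<^sub>v x"
            using annihilator[OF kctx cc] by blast
          have "vidx x < 2 ^ k" using vidx_less[OF x(1)] .
          moreover have "?c = cx k \<Gamma> (vidx x)" using x bits_vec_vidx[OF x(1)] by (simp add: cx_def)
          ultimately show False using False by blast
        qed
        then obtain m where m: "m \<in> set ML" "sk m \<bullet> ?c = 1" by auto
        have "PP m \<in> ?S"
        proof -
          have "PP m \<in> set (gens n k \<Gamma> j Binv G)" using m(1) gens_set by auto
          then have "PP m * 1\<^sub>m (2 ^ n) \<in> ?S" by (rule gen_group.gen_mult[OF _ gen_group.gen_one])
          then show ?thesis by simp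
        qed
        then have Pu: "PP m *\<^sub>v u = u" by (rule ufix)
        have "(\<Sum>i<2 ^ n. cnj (gz n EE ?c $ i) * (PP m *\<^sub>v u) $ i) = chi (sk m \<bullet> ?c) * (\<Sum>i<2 ^ n. cnj (gz n EE ?c $ i) * u $ i)"
          by (rule ip_Pmat[OF EEb sker_carrier[OF kctx] cc uc])
        then have "(\<Sum>i<2 ^ n. cnj (gz n EE ?c $ i) * u $ i) = chi (sk m \<bullet> ?c) * (\<Sum>i<2 ^ n. cnj (gz n EE ?c $ i) * u $ i)"
          unfolding Pu .
        then have "(\<Sum>i<2 ^ n. cnj (gz n EE ?c $ i) * u $ i) = - (\<Sum>i<2 ^ n. cnj (gz n EE ?c $ i) * u $ i)"
          using m(2) by (simp only: chi_1 mult_minus1)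
        then have "(\<Sum>i<2 ^ n. cnj (gz n EE ?c $ i) * u $ i) = 0" by (rule cplx_neg_self)
        then show ?thesis using split z1 by simp
      qed
    qed
    then have "u = ?EG *\<^sub>v w" using uc EGw by (rule vec_diff_zero)
    then show "u \<in> {?EG *\<^sub>v w | w. w \<in> carrier_vec (2 ^ k)}" using wc by blast
  qed
qed

end

lemma conj_inv2:
  assumes L: "unitary_mat d L" and a: "a \<in> carrier_mat d d"
  shows "L * (mat_adjoint L * a * L) * mat_adjoint L = a"
proof -
  have Lc: "L \<in> carrier_mat d d" using Lc[OF L] .
  have Lac: "mat_adjoint L \<in> carrier_mat d d" using Lc by simp
  have "L * (mat_adjoint L * a * L) * mat_adjoint L = (L * mat_adjoint L) * a * (L * mat_adjoint L)"
    using Lc Lac a by (simp add: assoc_mult_mat[of _ d d _ d _ d] mult_carrier_mat[of _ d d _ d])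
  then show ?thesis using LLa[OF L] a by simp
qed

lemma conj_scalar:
  assumes L: "unitary_mat d L"
  shows "L * (c \<cdot>\<^sub>m 1\<^sub>m d) * mat_adjoint L = (c :: complex) \<cdot>\<^sub>m 1\<^sub>m d"
proof -
  have Lc: "L \<in> carrier_mat d d" using Lc[OF L] .
  have Lac: "mat_adjoint L \<in> carrier_mat d d" using Lc by simp
  have e1: "L * (c \<cdot>\<^sub>m 1\<^sub>m d) = c \<cdot>\<^sub>m (L * 1\<^sub>m d)" by (rule mult_smult_distrib[OF Lc one_carrier_mat])
  have e2: "(c \<cdot>\<^sub>m (L * 1\<^sub>m d)) * mat_adjoint L = c \<cdot>\<^sub>m (L * 1\<^sub>m d * mat_adjoint L)"
    by (rule mult_smult_assoc_mat[OF _ Lac]) (use Lc in simp)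
  show ?thesis using e1 e2 conj_one[OF L] by simp
qed

lemma adj_triple:
  assumes L: "unitary_mat N L" and M: "M \<in> carrier_mat N K" and C: "C \<in> carrier_mat K K"
  shows "mat_adjoint (L * M * C) * (L * M * C) = mat_adjoint C * (mat_adjoint M * M) * C"
proof -
  have Lc: "L \<in> carrier_mat N N" using Lc[OF L] .
  have Lac: "mat_adjoint L \<in> carrier_mat N N" using Lc by simp
  have Mac: "mat_adjoint M \<in> carrier_mat K N" using M by simp
  have Cac: "mat_adjoint C \<in> carrier_mat K K" using C by simp
  have LM: "L * M \<in> carrier_mat N K" using Lc M by simp
  have MC: "M * C \<in> carrier_mat N K" using M C by simp
  have LMC: "L * M * C \<in> carrier_mat N K" using LM C by simp
  have BD: "mat_adjoint M * mat_adjoint L \<in> carrier_mat K N" using Mac Lac by simp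
  have "mat_adjoint (L * M * C) = mat_adjoint C * (mat_adjoint M * mat_adjoint L)"
    using adjoint_mult[OF LM C] adjoint_mult[OF Lc M] by simp
  then have "mat_adjoint (L * M * C) * (L * M * C) = mat_adjoint C * (mat_adjoint M * mat_adjoint L) * (L * M * C)"
    by simp
  also have "\<dots> = mat_adjoint C * ((mat_adjoint M * mat_adjoint L) * (L * M * C))"
    by (rule assoc_mult_mat[OF Cac BD LMC])
  also have "(mat_adjoint M * mat_adjoint L) * (L * M * C) = mat_adjoint M * (mat_adjoint L * (L * M * C))"
    by (rule assoc_mult_mat[OF Mac Lac LMC])
  also have "mat_adjoint L * (L * M * C) = (mat_adjoint L * L) * (M * C)"
    using assoc_mult_mat[OF Lac Lc MC, symmetric] assoc_mult_mat[OF Lc M C] by simp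
  also have "(mat_adjoint L * L) * (M * C) = M * C" using LaL[OF L] left_mult_one_mat[OF MC] by simp
  also have "mat_adjoint M * (M * C) = (mat_adjoint M * M) * C"
    by (rule assoc_mult_mat[OF Mac M C, symmetric])
  also have "mat_adjoint C * ((mat_adjoint M * M) * C) = mat_adjoint C * (mat_adjoint M * M) * C"
    by (rule assoc_mult_mat[OF Cac mult_carrier_mat[OF Mac M] C, symmetric])
  finally show ?thesis .
qed

theorem proposition2:
  fixes n k :: nat and G \<Gamma> :: "bit mat" and C :: "complex mat" and U :: "nat \<Rightarrow> complex mat"
  assumes "1 \<le> k" and "k < n"
    and "simple_graph_adj n G"
    and "\<Gamma> \<in> carrier_mat k n"
    and "clifford k C"
    and "\<forall>j<n. clifford 1 (U j)"
  shows "stabilizer_encoder n k (tensor_ops n U * graph_encoder n k G \<Gamma> * C)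
         \<longleftrightarrow> vec_space.rank k \<Gamma> = k"
proof -
  note \<Gamma>c = assms(4)
  define L where "L = tensor_ops n U"
  define EG where "EG = graph_encoder n k G \<Gamma>"
  have Lu: "unitary_mat (2 ^ n) L" unfolding L_def
    using assms(6) by (intro tensor_unitary) (auto simp: clifford_def)
  have Lcar: "L \<in> carrier_mat (2 ^ n) (2 ^ n)" using Lc[OF Lu] .
  have Cu: "unitary_mat (2 ^ k) C" using assms(5) by (simp add: clifford_def)
  have Cc: "C \<in> carrier_mat (2 ^ k) (2 ^ k)" using Lc[OF Cu] .
  have Cac: "mat_adjoint C \<in> carrier_mat (2 ^ k) (2 ^ k)" using Cc by simp
  have EGc: "EG \<in> carrier_mat (2 ^ n) (2 ^ k)" unfolding EG_def by (rule EG_carrier[OF \<Gamma>c])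
  have Ec: "L * EG * C \<in> carrier_mat (2 ^ n) (2 ^ k)" using Lcar EGc Cc by simp
  have adj: "mat_adjoint (L * EG * C) * (L * EG * C) = mat_adjoint C * (mat_adjoint EG * EG) * C"
    by (rule adj_triple[OF Lu EGc Cc])
  show ?thesis
  proof
    assume enc: "stabilizer_encoder n k (tensor_ops n U * graph_encoder n k G \<Gamma> * C)"
    then obtain c where c: "c \<noteq> 0" "mat_adjoint (L * EG * C) * (L * EG * C) = c \<cdot>\<^sub>m 1\<^sub>m (2 ^ k)"
      unfolding stabilizer_encoder_def L_def EG_def by blast
    have MM: "mat_adjoint EG * EG \<in> carrier_mat (2 ^ k) (2 ^ k)" using mult_carrier_mat[OF mat_adjoint_carrier[OF EGc] EGc] .
    have "mat_adjoint EG * EG = C * (mat_adjoint C * (mat_adjoint EG * EG) * C) * mat_adjoint C"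
      using conj_inv2[OF Cu MM] by simp
    also have "\<dots> = C * (c \<cdot>\<^sub>m 1\<^sub>m (2 ^ k)) * mat_adjoint C" using c(2) adj by simp
    also have "\<dots> = c \<cdot>\<^sub>m 1\<^sub>m (2 ^ k)" by (rule conj_scalar[OF Cu])
    finally have iso: "mat_adjoint EG * EG = c \<cdot>\<^sub>m 1\<^sub>m (2 ^ k)" .
    show "vec_space.rank k \<Gamma> = k"
    proof (rule ccontr)
      assume "vec_space.rank k \<Gamma> \<noteq> k"
      then obtain x0 where x0: "x0 \<in> carrier_vec k" "x0 \<noteq> 0\<^sub>v k" "transpose_mat \<Gamma> *\<^sub>v x0 = 0\<^sub>v n"
        using gamma_rank_aux[OF \<Gamma>c] by blast
      let ?x = "vidx x0"
      have x: "?x < 2 ^ k" using vidx_less[OF x0(1)] .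
      have bx: "bits_vec k ?x = x0" using bits_vec_vidx[OF x0(1)] .
      have xne: "?x \<noteq> 0" using bx x0(2) bits_vec_0 by auto
      have z: "(0::nat) < 2 ^ k" by simp
      have "cx k \<Gamma> ?x = 0\<^sub>v n" unfolding cx_def bx using x0(3) .
      moreover have "cx k \<Gamma> 0 = 0\<^sub>v n" unfolding cx_def bits_vec_0 using \<Gamma>c by (simp add: mat_vec_zero)
      ultimately have "(mat_adjoint EG * EG) $$ (?x, 0) = 1"
        unfolding EG_def EG_adj[OF \<Gamma>c] using x z by simp
      moreover have "(c \<cdot>\<^sub>m 1\<^sub>m (2 ^ k)) $$ (?x, 0) = 0" using x z xne by simp
      ultimately show False using iso by simp
    qed
  next
    assume rk: "vec_space.rank k \<Gamma> = k"
    obtain j Binv where j: "\<forall>a<k. j a < n" "inj_on j {..<k}" "Binv \<in> carrier_mat k k"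
        "Binv * Bmat \<Gamma> j k = 1\<^sub>m k" "Bmat \<Gamma> j k * Binv = 1\<^sub>m k"
      using gamma_rank_aux[OF \<Gamma>c] rk unfolding Bmat_def by blast
    note ctx = \<Gamma>c j(1) j(2) j(3) j(4) j(5) rk
    define S0 where "S0 = gen_group n (set (gens n k \<Gamma> j Binv G))"
    have st0: "stabilizer_group n k S0" unfolding S0_def by (rule S0_stab[OF ctx])
    have S0c: "S0 \<subseteq> carrier_mat (2 ^ n) (2 ^ n)"
    proof -
      have "set (gens n k \<Gamma> j Binv G) \<subseteq> carrier_mat (2 ^ n) (2 ^ n)" by (auto simp: gens_def)
      then show ?thesis unfolding S0_def using gen_group_carrier by blast
    qed
    have st: "stabilizer_group n k ((\<lambda>M. L * M * mat_adjoint L) ` S0)"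
      by (rule stab_conj[OF Lu st0]) (use conj_pauli[OF assms(6)] L_def in simp)
    have img: "{L * EG * C *\<^sub>v v | v. v \<in> carrier_vec (2 ^ k)} = (\<lambda>v. L *\<^sub>v v) ` {EG *\<^sub>v w | w. w \<in> carrier_vec (2 ^ k)}"
    proof
      show "{L * EG * C *\<^sub>v v | v. v \<in> carrier_vec (2 ^ k)} \<subseteq> (\<lambda>v. L *\<^sub>v v) ` {EG *\<^sub>v w | w. w \<in> carrier_vec (2 ^ k)}"
      proof
        fix u assume "u \<in> {L * EG * C *\<^sub>v v | v. v \<in> carrier_vec (2 ^ k)}"
        then obtain v where v: "v \<in> carrier_vec (2 ^ k)" "u = L * EG * C *\<^sub>v v" by blast
        have "u = L *\<^sub>v (EG *\<^sub>v (C *\<^sub>v v))"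
          using v Lcar EGc Cc by (simp add: assoc_mult_mat_vec[of _ "2^n" "2^n" _ "2^k"] assoc_mult_mat_vec[of _ "2^n" "2^k" _ "2^k"])
        moreover have "C *\<^sub>v v \<in> carrier_vec (2 ^ k)" using Cc v by simp
        ultimately show "u \<in> (\<lambda>v. L *\<^sub>v v) ` {EG *\<^sub>v w | w. w \<in> carrier_vec (2 ^ k)}" by blast
      qed
    next
      show "(\<lambda>v. L *\<^sub>v v) ` {EG *\<^sub>v w | w. w \<in> carrier_vec (2 ^ k)} \<subseteq> {L * EG * C *\<^sub>v v | v. v \<in> carrier_vec (2 ^ k)}"
      proof
        fix u assume "u \<in> (\<lambda>v. L *\<^sub>v v) ` {EG *\<^sub>v w | w. w \<in> carrier_vec (2 ^ k)}"
        then obtain w where w: "w \<in> carrier_vec (2 ^ k)" "u = L *\<^sub>v (EG *\<^sub>v w)" by blast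
        define v where "v = mat_adjoint C *\<^sub>v w"
        have vc: "v \<in> carrier_vec (2 ^ k)" unfolding v_def using Cac w by simp
        have "C *\<^sub>v v = (C * mat_adjoint C) *\<^sub>v w"
          unfolding v_def by (rule assoc_mult_mat_vec[OF Cc Cac w(1), symmetric])
        also have "\<dots> = w" using LLa[OF Cu] w by simp
        finally have Cv: "C *\<^sub>v v = w" .
        have "L * EG * C *\<^sub>v v = L *\<^sub>v (EG *\<^sub>v (C *\<^sub>v v))"
          using vc Lcar EGc Cc by (simp add: assoc_mult_mat_vec[of _ "2^n" "2^n" _ "2^k"] assoc_mult_mat_vec[of _ "2^n" "2^k" _ "2^k"])
        then have "u = L * EG * C *\<^sub>v v" using Cv w by simp
        then show "u \<in> {L * EG * C *\<^sub>v v | v. v \<in> carrier_vec (2 ^ k)}" using vc by blast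
      qed
    qed
    have code: "{L * EG * C *\<^sub>v v | v. v \<in> carrier_vec (2 ^ k)} = codespace n ((\<lambda>M. L * M * mat_adjoint L) ` S0)"
    proof -
      have "{EG *\<^sub>v w | w. w \<in> carrier_vec (2 ^ k)} = codespace n S0"
        unfolding EG_def S0_def by (rule code_S0[OF ctx])
      then have "{L * EG * C *\<^sub>v v | v. v \<in> carrier_vec (2 ^ k)} = (\<lambda>v. L *\<^sub>v v) ` codespace n S0"
        using img by simp
      also have "\<dots> = codespace n ((\<lambda>M. L * M * mat_adjoint L) ` S0)"
        using codespace_conj[OF Lu S0c] by simp
      finally show ?thesis .
    qed
    have iso: "mat_adjoint (L * EG * C) * (L * EG * C) = 1 \<cdot>\<^sub>m 1\<^sub>m (2 ^ k)"
    proof -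
      have "mat_adjoint (L * EG * C) * (L * EG * C) = mat_adjoint C * 1\<^sub>m (2 ^ k) * C"
        using adj EG_iso[OF \<Gamma>c rk] unfolding EG_def by simp
      also have "\<dots> = 1\<^sub>m (2 ^ k)" using Cac Cc LaL[OF Cu] by simp
      also have "\<dots> = 1 \<cdot>\<^sub>m 1\<^sub>m (2 ^ k)" by (intro eq_matI) auto
      finally show ?thesis .
    qed
    show "stabilizer_encoder n k (tensor_ops n U * graph_encoder n k G \<Gamma> * C)"
      unfolding stabilizer_encoder_def L_def[symmetric] EG_def[symmetric]
      using Ec iso code st by (intro conjI exI[of _ 1] exI[of _ "(\<lambda>M. L * M * mat_adjoint L) ` S0"]) auto
  qed
qed

end
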